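(* Assume $\sigma\in C^2(\mathbb{R})$. Then $$\big\|\mathrm{Cov}(\hat{\mathcal{I}}_2(\theta))\big\|_F\le\frac1N\,\Big\|\frac{\partial^2h_L(x)}{\partial\theta\partial\theta^\top}\Big\|_F^2\,\|\mathcal{I}(h_L)\|_F.$$
   Context: Setup. Fix an input $x\in\mathbb{R}^{n_0}$ and integers $L\ge1$, $n_1,\dots,n_L\ge1$. Network. The parameters are $\theta=(W_0,\dots,W_{L-1})$, with $W_l\in\mathbb{R}^{n_{l+1}\times(n_l+1)}$, viewed as a vector in $\mathbb{R}^{\dim\theta}$. Let $\sigma$ be applied entrywise. Set $h_0=x$ and $\bar h_l=(h_l^\top,1)^\top$. For $1\le l\le L-1$ let $h_l=\sigma(W_{l-1}\bar h_{l-1})$, and let $h_L=W_{L-1}\bar h_{L-1}\in\mathbb{R}^{n_L}$. Exponential family. The model is $p(y\mid x,\theta)=\exp(t(y)^\top h_L-F(h_L))$ with respect to a base measure $\nu$, where $t(y)\in\mathbb{R}^{n_L}$ and $F(h)=\log\int\exp(t(y)^\top h)\,d\nu(y)$. Assume $h_L$ lies in the interior of the natural parameter space. Write $\mathcal{I}(h_L)=\nabla^2F(h_L)=\mathrm{Cov}(t(y))$, with $y\sim p(y\mid x,\theta)$. Estimator. Let $\ell=\log p(y\mid x,\theta)$. With $N$ i.i.d. samples $y_i\sim p(y\mid x,\theta)$ and $\ell_i=\log p(y_i\mid x,\theta)$, let $\hat{\mathcal{I}}_2(\theta)=\frac1N\sum_i(-\frac{\partial^2\ell_i}{\partial\theta\partial\theta^\top})$.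 Notation. $\mathrm{Cov}(\hat{\mathcal{I}}_2(\theta))$ is the 4-tensor with entries $\mathrm{Cov}(\hat{\mathcal{I}}_2^{ij},\hat{\mathcal{I}}_2^{kl})$. $\frac{\partial^2h_L}{\partial\theta\partial\theta^\top}$ is the $n_L\times\dim\theta\times\dim\theta$ tensor of second derivatives. $\|\cdot\|_F$ is the square root of the sum of squared entries. *)

theory Defs
  imports "HOL-Probability.Probability"
begin

definition C2 :: "(real \<Rightarrow> real) \<Rightarrow> bool" where
  "C2 f \<longleftrightarrow> (\<exists>f' f''. (\<forall>z. (f has_real_derivative f' z) (at z)) \<and>
                     (\<forall>z. (f' has_real_derivative f'' z) (at z)) \<and> continuous_on UNIV f'')"

text \<open>Parameters: W(l,i,j) is entry (i,j) of W_l, with column j = n l the bias column.\<close>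
type_synonym params = "nat \<times> nat \<times> nat \<Rightarrow> real"

definition param_index :: "nat \<Rightarrow> (nat \<Rightarrow> nat) \<Rightarrow> (nat \<times> nat \<times> nat) set" where
  "param_index L n = {(l,i,j). l < L \<and> i < n (Suc l) \<and> j \<le> n l}"

fun layer :: "(real \<Rightarrow> real) \<Rightarrow> nat \<Rightarrow> (nat \<Rightarrow> nat) \<Rightarrow> params \<Rightarrow> (nat \<Rightarrow> real) \<Rightarrow> nat \<Rightarrow> (nat \<Rightarrow> real)" where
  "layer \<sigma> L n W x 0 = x"
| "layer \<sigma> L n W x (Suc l) =
     (\<lambda>i. let z = (\<Sum>j\<le>n l. W (l,i,j) * (if j < n l then layer \<sigma> L n W x l j else 1))
          in if Suc l < L then \<sigma> z else z)"

definition net_out :: "(real \<Rightarrow> real) \<Rightarrow> nat \<Rightarrow> (nat \<Rightarrow> nat) \<Rightarrow> params \<Rightarrow> (nat \<Rightarrow> real) \<Rightarrow> nat \<Rightarrow> real" where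
  "net_out \<sigma> L n W x = layer \<sigma> L n W x L"

definition partial :: "nat \<times> nat \<times> nat \<Rightarrow> (params \<Rightarrow> real) \<Rightarrow> params \<Rightarrow> real" where
  "partial p f W = deriv (\<lambda>v. f (W(p := v))) (W p)"

definition partial2 :: "nat \<times> nat \<times> nat \<Rightarrow> nat \<times> nat \<times> nat \<Rightarrow> (params \<Rightarrow> real) \<Rightarrow> params \<Rightarrow> real" where
  "partial2 p q f W = partial p (\<lambda>W'. partial q f W') W"

text \<open>Exponential family with sufficient statistic t (components a < m) w.r.t. base measure nu.\<close>
definition log_partition :: "'y measure \<Rightarrow> ('y \<Rightarrow> nat \<Rightarrow> real) \<Rightarrow> nat \<Rightarrow> (nat \<Rightarrow> real) \<Rightarrow> real" where
  "log_partition \<nu> t m h = ln (LINT y|\<nu>. exp (\<Sum>a<m. t y a * h a))"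

definition nat_param_interior :: "'y measure \<Rightarrow> ('y \<Rightarrow> nat \<Rightarrow> real) \<Rightarrow> nat \<Rightarrow> (nat \<Rightarrow> real) \<Rightarrow> bool" where
  "nat_param_interior \<nu> t m h \<longleftrightarrow>
     (\<exists>\<epsilon>>0. \<forall>h'. (\<forall>a<m. \<bar>h' a - h a\<bar> < \<epsilon>) \<longrightarrow>
        (\<integral>\<^sup>+ y. ennreal (exp (\<Sum>a<m. t y a * h' a)) \<partial>\<nu>) < \<infinity>)"

definition model_dist :: "'y measure \<Rightarrow> ('y \<Rightarrow> nat \<Rightarrow> real) \<Rightarrow> nat \<Rightarrow> (nat \<Rightarrow> real) \<Rightarrow> 'y measure" where
  "model_dist \<nu> t m h =
     density \<nu> (\<lambda>y. ennreal (exp ((\<Sum>a<m. t y a * h a) - log_partition \<nu> t m h)))"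

definition covariance :: "'a measure \<Rightarrow> ('a \<Rightarrow> real) \<Rightarrow> ('a \<Rightarrow> real) \<Rightarrow> real" where
  "covariance M X Y = (LINT \<omega>|M. (X \<omega> - integral\<^sup>L M X) * (Y \<omega> - integral\<^sup>L M Y))"

definition loglik :: "(real \<Rightarrow> real) \<Rightarrow> nat \<Rightarrow> (nat \<Rightarrow> nat) \<Rightarrow> (nat \<Rightarrow> real) \<Rightarrow> 'y measure
     \<Rightarrow> ('y \<Rightarrow> nat \<Rightarrow> real) \<Rightarrow> 'y \<Rightarrow> params \<Rightarrow> real" where
  "loglik \<sigma> L n x \<nu> t y W =
     (\<Sum>a<n L. t y a * net_out \<sigma> L n W x a) - log_partition \<nu> t (n L) (net_out \<sigma> L n W x)"

definition I2hat :: "(real \<Rightarrow> real) \<Rightarrow> nat \<Rightarrow> (nat \<Rightarrow> nat) \<Rightarrow> (nat \<Rightarrow> real) \<Rightarrow> 'y measure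
     \<Rightarrow> ('y \<Rightarrow> nat \<Rightarrow> real) \<Rightarrow> nat \<Rightarrow> params \<Rightarrow> nat \<times> nat \<times> nat \<Rightarrow> nat \<times> nat \<times> nat
     \<Rightarrow> (nat \<Rightarrow> 'y) \<Rightarrow> real" where
  "I2hat \<sigma> L n x \<nu> t N \<theta> p q ys =
     (1 / real N) * (\<Sum>i<N. - partial2 p q (loglik \<sigma> L n x \<nu> t (ys i)) \<theta>)"

definition sample_law :: "(real \<Rightarrow> real) \<Rightarrow> nat \<Rightarrow> (nat \<Rightarrow> nat) \<Rightarrow> (nat \<Rightarrow> real) \<Rightarrow> 'y measure
     \<Rightarrow> ('y \<Rightarrow> nat \<Rightarrow> real) \<Rightarrow> nat \<Rightarrow> params \<Rightarrow> (nat \<Rightarrow> 'y) measure" where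
  "sample_law \<sigma> L n x \<nu> t N \<theta> =
     PiM {..<N} (\<lambda>_. model_dist \<nu> t (n L) (net_out \<sigma> L n \<theta> x))"

end

theory Submission
  imports Defs
begin


definition lineD :: "(params \<Rightarrow> real) \<Rightarrow> nat\<times>nat\<times>nat \<Rightarrow> params \<Rightarrow> real \<Rightarrow> bool" where
 "lineD f p W d \<longleftrightarrow> ((\<lambda>v. f (W(p:=v))) has_real_derivative d) (at (W p))"

definition D1 :: "(params \<Rightarrow> real) \<Rightarrow> bool" where
 "D1 f \<longleftrightarrow> (\<forall>W p. \<exists>d. lineD f p W d)"

definition D2 :: "(params \<Rightarrow> real) \<Rightarrow> bool" where
 "D2 f \<longleftrightarrow> D1 f \<and> (\<forall>q. D1 (partial q f))"

lemma lineD_partial: "lineD f p W d \<Longrightarrow> partial p f W = d"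
  unfolding lineD_def partial_def by (rule DERIV_imp_deriv)

lemma D1_lineD: "D1 f \<Longrightarrow> lineD f p W (partial p f W)"
  using lineD_partial unfolding D1_def by metis

lemma D1_lineD_upd: "D1 f \<Longrightarrow>
  ((\<lambda>v. f (W(p:=v))) has_real_derivative (partial p f (W(p:=u)))) (at u)"
  using D1_lineD[of f p "W(p:=u)"] unfolding lineD_def by simp

lemma D1_cont_upd: "D1 f \<Longrightarrow> isCont (\<lambda>v. f (W(p:=v))) u"
  using D1_lineD_upd DERIV_isCont by blast

lemma lineD_const: "lineD (\<lambda>_. c) p W 0"
  unfolding lineD_def by simp

lemma lineD_coord: "lineD (\<lambda>W. W r) p W (if r = p then 1 else 0)"
  unfolding lineD_def by (cases "r = p") auto

lemma lineD_add: "lineD f p W a \<Longrightarrow> lineD g p W b \<Longrightarrow> lineD (\<lambda>W. f W + g W) p W (a + b)"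
  unfolding lineD_def by (rule DERIV_add)

lemma lineD_mult: "lineD f p W a \<Longrightarrow> lineD g p W b \<Longrightarrow>
   lineD (\<lambda>W. f W * g W) p W (f W * b + a * g W)"
  unfolding lineD_def by (drule (1) DERIV_mult) (simp add: ac_simps)

lemma lineD_comp: "(\<And>z. (g has_real_derivative g' z) (at z)) \<Longrightarrow> lineD f p W a \<Longrightarrow>
   lineD (\<lambda>W. g (f W)) p W (g' (f W) * a)"
  unfolding lineD_def using DERIV_chain2[of g "g' (f W)" "\<lambda>v. f (W(p:=v))" "W p" a] by simp

lemma D1_const: "D1 (\<lambda>_. c)" unfolding D1_def using lineD_const by blast
lemma D1_coord: "D1 (\<lambda>W. W r)" unfolding D1_def using lineD_coord by blast
lemma D1_add: "D1 f \<Longrightarrow> D1 g \<Longrightarrow> D1 (\<lambda>W. f W + g W)" unfolding D1_def using lineD_add by blast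
lemma D1_mult: "D1 f \<Longrightarrow> D1 g \<Longrightarrow> D1 (\<lambda>W. f W * g W)" unfolding D1_def using lineD_mult by blast
lemma D1_comp: "(\<And>z. (g has_real_derivative g' z) (at z)) \<Longrightarrow> D1 f \<Longrightarrow> D1 (\<lambda>W. g (f W))"
  unfolding D1_def using lineD_comp by blast

lemma partial_add: "D1 f \<Longrightarrow> D1 g \<Longrightarrow> partial p (\<lambda>W. f W + g W) = (\<lambda>W. partial p f W + partial p g W)"
  by (rule ext, rule lineD_partial, intro lineD_add D1_lineD)
lemma partial_mult: "D1 f \<Longrightarrow> D1 g \<Longrightarrow> partial p (\<lambda>W. f W * g W) = (\<lambda>W. f W * partial p g W + partial p f W * g W)"
  by (rule ext, rule lineD_partial, intro lineD_mult D1_lineD)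
lemma partial_comp: "(\<And>z. (g has_real_derivative g' z) (at z)) \<Longrightarrow> D1 f \<Longrightarrow>
   partial p (\<lambda>W. g (f W)) = (\<lambda>W. g' (f W) * partial p f W)"
  by (rule ext, rule lineD_partial, intro lineD_comp D1_lineD)
lemma partial_const: "partial p (\<lambda>_. c) = (\<lambda>_. 0)"
  by (rule ext, rule lineD_partial, rule lineD_const)
lemma partial_coord: "partial p (\<lambda>W. W r) = (\<lambda>_. if r = p then 1 else 0)"
  by (rule ext, rule lineD_partial, rule lineD_coord)

lemma D1_sum: "finite A \<Longrightarrow> (\<And>i. i \<in> A \<Longrightarrow> D1 (f i)) \<Longrightarrow> D1 (\<lambda>W. \<Sum>i\<in>A. f i W)"
  by (induction A rule: finite_induct) (auto intro: D1_const D1_add)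

lemma partial_sum: "finite A \<Longrightarrow> (\<And>i. i \<in> A \<Longrightarrow> D1 (f i)) \<Longrightarrow>
   partial p (\<lambda>W. \<Sum>i\<in>A. f i W) = (\<lambda>W. \<Sum>i\<in>A. partial p (f i) W)"
proof (induction A rule: finite_induct)
  case empty then show ?case by (simp add: partial_const)
next
  case (insert a A)
  have "partial p (\<lambda>W. \<Sum>i\<in>insert a A. f i W) = partial p (\<lambda>W. f a W + (\<Sum>i\<in>A. f i W))"
    using insert by simp
  also have "\<dots> = (\<lambda>W. partial p (f a) W + partial p (\<lambda>W. \<Sum>i\<in>A. f i W) W)"
    using insert by (intro partial_add D1_sum) auto
  finally show ?case using insert by simp
qed

lemma D2_D1: "D2 f \<Longrightarrow> D1 f" unfolding D2_def by simp
lemma D2_D1p: "D2 f \<Longrightarrow> D1 (partial q f)" unfolding D2_def by blast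

lemma D2_const: "D2 (\<lambda>_. c)" unfolding D2_def by (simp add: D1_const partial_const)
lemma D2_coord: "D2 (\<lambda>W. W r)" unfolding D2_def by (simp add: D1_coord partial_coord D1_const)
lemma D2_add: "D2 f \<Longrightarrow> D2 g \<Longrightarrow> D2 (\<lambda>W. f W + g W)"
  unfolding D2_def by (simp add: D1_add partial_add)
lemma D2_mult: "D2 f \<Longrightarrow> D2 g \<Longrightarrow> D2 (\<lambda>W. f W * g W)"
  unfolding D2_def by (simp add: D1_add D1_mult partial_mult)
lemma D2_sum: "finite A \<Longrightarrow> (\<And>i. i \<in> A \<Longrightarrow> D2 (f i)) \<Longrightarrow> D2 (\<lambda>W. \<Sum>i\<in>A. f i W)"
  by (induction A rule: finite_induct) (auto intro: D2_const D2_add)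
lemma D2_comp: assumes "\<And>z. (g has_real_derivative g' z) (at z)" "\<And>z. (g' has_real_derivative g'' z) (at z)"
  and "D2 f" shows "D2 (\<lambda>W. g (f W))"
proof -
  have "D1 (\<lambda>W. g (f W))" by (rule D1_comp[OF assms(1) D2_D1[OF assms(3)]])
  moreover have "D1 (partial q (\<lambda>W. g (f W)))" for q
    unfolding partial_comp[OF assms(1) D2_D1[OF assms(3)]]
    by (intro D1_mult D1_comp[OF assms(2)] D2_D1 D2_D1p assms(3))
  ultimately show ?thesis unfolding D2_def by blast
qed

lemma D2_if: "D2 f \<Longrightarrow> D2 g \<Longrightarrow> D2 (\<lambda>W. if c then f W else g W)" by (cases c) auto

lemma layer_D2:
  assumes "C2 \<sigma>"
  shows "D2 (\<lambda>W. layer \<sigma> L n W x l i)"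
proof -
  obtain s1 s2 where s1: "\<And>z. (\<sigma> has_real_derivative s1 z) (at z)"
     and s2: "\<And>z. (s1 has_real_derivative s2 z) (at z)"
    using assms unfolding C2_def by blast
  show ?thesis
  proof (induction l arbitrary: i)
    case 0 then show ?case by (simp add: D2_const)
  next
    case (Suc l)
    have z: "D2 (\<lambda>W. \<Sum>j\<le>n l. W (l,i,j) * (if j < n l then layer \<sigma> L n W x l j else 1))"
      by (intro D2_sum D2_mult D2_coord) (auto simp: Suc D2_const intro!: D2_if)
    show ?case
    proof (cases "Suc l < L")
      case True
      then show ?thesis by (simp add: Let_def) (rule D2_comp[OF s1 s2 z])
    next
      case False
      then show ?thesis using z by (simp add: Let_def)
    qed
  qed
qed

lemma net_out_D2: "C2 \<sigma> \<Longrightarrow> D2 (\<lambda>W. net_out \<sigma> L n W x a)"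
  unfolding net_out_def by (rule layer_D2)




lemma mvt_quot_bound:
  fixes g g' :: "real \<Rightarrow> real"
  assumes d: "\<And>v. v \<in> ball v0 r \<Longrightarrow> (g has_real_derivative g' v) (at v)"
    and b: "\<And>v. v \<in> ball v0 r \<Longrightarrow> \<bar>g' v\<bar> \<le> B"
    and u: "u \<in> ball v0 r" "u \<noteq> v0"
  shows "\<bar>(g u - g v0) / (u - v0)\<bar> \<le> B"
proof (cases "v0 < u")
  case True
  have "\<And>x. v0 \<le> x \<Longrightarrow> x \<le> u \<Longrightarrow> x \<in> ball v0 r" using u by (auto simp: dist_real_def)
  then obtain z where z: "v0 < z" "z < u" "g u - g v0 = (u - v0) * g' z"
    using MVT2[OF True, of g g'] d by blast
  have "z \<in> ball v0 r" using z u by (auto simp: dist_real_def)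
  then show ?thesis using z True b by simp
next
  case False
  then have lt: "u < v0" using u by auto
  have "\<And>x. u \<le> x \<Longrightarrow> x \<le> v0 \<Longrightarrow> x \<in> ball v0 r" using u by (auto simp: dist_real_def)
  then obtain z where z: "u < z" "z < v0" "g v0 - g u = (v0 - u) * g' z"
    using MVT2[OF lt, of g g'] d by blast
  have "z \<in> ball v0 r" using z u by (auto simp: dist_real_def)
  moreover have "(g u - g v0) / (u - v0) = g' z"
    using z lt by (simp add: field_simps)
  ultimately show ?thesis using b by simp
qed

lemma leibniz_real:
  fixes f f' :: "real \<Rightarrow> 'a \<Rightarrow> real" and D :: "'a \<Rightarrow> real"
  assumes r: "0 < r"
  and der: "\<And>v y. v \<in> ball v0 r \<Longrightarrow> y \<in> space M \<Longrightarrow> ((\<lambda>u. f u y) has_real_derivative f' v y) (at v)"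
  and intf: "\<And>v. v \<in> ball v0 r \<Longrightarrow> integrable M (f v)"
  and meas': "f' v0 \<in> borel_measurable M"
  and intD: "integrable M D"
  and bound: "\<And>v y. v \<in> ball v0 r \<Longrightarrow> y \<in> space M \<Longrightarrow> \<bar>f' v y\<bar> \<le> D y"
  shows "((\<lambda>v. \<integral>y. f v y \<partial>M) has_real_derivative (\<integral>y. f' v0 y \<partial>M)) (at v0)"
  unfolding has_field_derivative_iff
proof (subst tendsto_at_iff_sequentially, intro allI impI)
  fix X :: "nat \<Rightarrow> real"
  assume X: "\<forall>i. X i \<in> UNIV - {v0}" and lim: "X \<longlonglongrightarrow> v0"
  have "eventually (\<lambda>i. X i \<in> ball v0 r) sequentially"
    using lim r by (simp add: tendsto_iff dist_commute)
  then obtain N0 where N0: "\<And>i. i \<ge> N0 \<Longrightarrow> X i \<in> ball v0 r"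
    by (auto simp: eventually_sequentially)
  have v0b: "v0 \<in> ball v0 r" using r by simp
  define s where "s n y = (f (X (n + N0)) y - f v0 y) / (X (n + N0) - v0)" for n y
  have Xb: "X (n + N0) \<in> ball v0 r" for n using N0 by simp
  have Xne: "X (n + N0) \<noteq> v0" for n using X by auto
  have "(\<lambda>n. \<integral>y. s n y \<partial>M) \<longlonglongrightarrow> (\<integral>y. f' v0 y \<partial>M)"
  proof (rule integral_dominated_convergence[where w=D])
    show "s n \<in> borel_measurable M" for n
      unfolding s_def using intf[OF Xb] intf[OF v0b] by measurable
    show "f' v0 \<in> borel_measurable M" by fact
    show "integrable M D" by fact
    show "AE y in M. (\<lambda>n. s n y) \<longlonglongrightarrow> f' v0 y"
    proof (rule AE_I2)
      fix y assume y: "y \<in> space M"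
      have "((\<lambda>u. (f u y - f v0 y) / (u - v0)) \<longlongrightarrow> f' v0 y) (at v0)"
        using der[OF v0b y] unfolding has_field_derivative_iff by simp
      then have "((\<lambda>u. (f u y - f v0 y) / (u - v0)) \<circ> X) \<longlonglongrightarrow> f' v0 y"
        using X lim unfolding tendsto_at_iff_sequentially by blast
      then show "(\<lambda>n. s n y) \<longlonglongrightarrow> f' v0 y"
        unfolding s_def o_def by (rule LIMSEQ_ignore_initial_segment)
    qed
    show "AE y in M. norm (s n y) \<le> D y" for n
    proof (rule AE_I2)
      fix y assume y: "y \<in> space M"
      show "norm (s n y) \<le> D y"
        unfolding s_def real_norm_def
        by (rule mvt_quot_bound[where r=r and g'="\<lambda>v. f' v y"]) (use der y bound Xb Xne in auto)
    qed
  qed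
  moreover have "(\<integral>y. s n y \<partial>M) = ((\<lambda>u. ((\<integral>y. f u y \<partial>M) - (\<integral>y. f v0 y \<partial>M)) / (u - v0)) \<circ> X) (n + N0)" for n
    unfolding s_def o_def
    by (subst integral_divide_zero) (simp add: Bochner_Integration.integral_diff[OF intf[OF Xb] intf[OF v0b]])
  ultimately have "(\<lambda>n. ((\<lambda>u. ((\<integral>y. f u y \<partial>M) - (\<integral>y. f v0 y \<partial>M)) / (u - v0)) \<circ> X) (n + N0)) \<longlonglongrightarrow> (\<integral>y. f' v0 y \<partial>M)"
    by (simp only:)
  then show "((\<lambda>u. ((\<integral>y. f u y \<partial>M) - (\<integral>y. f v0 y \<partial>M)) / (u - v0)) \<circ> X) \<longlonglongrightarrow> (\<integral>y. f' v0 y \<partial>M)"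
    by (rule LIMSEQ_offset)
qed




lemma prod_two: "finite A \<Longrightarrow> i \<in> A \<Longrightarrow> j \<in> A \<Longrightarrow> i \<noteq> j \<Longrightarrow> (\<And>k. k \<in> A - {i,j} \<Longrightarrow> g k = 1) \<Longrightarrow> prod g A = (g i :: real) * g j"
proof -
  assume a: "finite A" "i \<in> A" "j \<in> A" "i \<noteq> j" "\<And>k. k \<in> A - {i,j} \<Longrightarrow> g k = 1"
  have "prod g A = g i * prod g (A - {i})" using a by (intro prod.remove) auto
  also have "prod g (A - {i}) = g j * prod g (A - {i} - {j})" using a by (intro prod.remove) auto
  also have "prod g (A - {i} - {j}) = 1" using a by (intro prod.neutral) auto
  finally show ?thesis by simp
qed

lemma prod_one: "finite A \<Longrightarrow> i \<in> A \<Longrightarrow> (\<And>k. k \<in> A - {i} \<Longrightarrow> g k = 1) \<Longrightarrow> prod g A = (g i :: real)"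
proof -
  assume a: "finite A" "i \<in> A" "\<And>k. k \<in> A - {i} \<Longrightarrow> g k = 1"
  have "prod g A = g i * prod g (A - {i})" using a by (intro prod.remove) auto
  also have "prod g (A - {i}) = 1" using a by (intro prod.neutral) auto
  finally show ?thesis by simp
qed

lemma pim_prod_facts:
  fixes F :: "nat \<Rightarrow> 'y \<Rightarrow> real" and N :: nat
  assumes P: "prob_space \<mu>" and int: "\<And>k. k < N \<Longrightarrow> integrable \<mu> (F k)"
  shows "integrable (PiM {..<N} (\<lambda>_. \<mu>)) (\<lambda>ys. \<Prod>k<N. F k (ys k))"
    "(\<integral>ys. (\<Prod>k<N. F k (ys k)) \<partial>PiM {..<N} (\<lambda>_. \<mu>)) = (\<Prod>k<N. integral\<^sup>L \<mu> (F k))"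
proof -
  interpret prob_space \<mu> by fact
  interpret product_sigma_finite "\<lambda>_. \<mu>"
    by unfold_locales
  show "integrable (PiM {..<N} (\<lambda>_. \<mu>)) (\<lambda>ys. \<Prod>k<N. F k (ys k))"
    by (rule product_integrable_prod) (use int in auto)
  show "(\<integral>ys. (\<Prod>k<N. F k (ys k)) \<partial>PiM {..<N} (\<lambda>_. \<mu>)) = (\<Prod>k<N. integral\<^sup>L \<mu> (F k))"
    by (rule product_integral_prod) (use int in auto)
qed

lemma pim_single:
  fixes \<phi> :: "'y \<Rightarrow> real" and N :: nat
  assumes P: "prob_space \<mu>" and int: "integrable \<mu> \<phi>" and i: "i < N"
  shows "integrable (PiM {..<N} (\<lambda>_. \<mu>)) (\<lambda>ys. \<phi> (ys i))"
    "(\<integral>ys. \<phi> (ys i) \<partial>PiM {..<N} (\<lambda>_. \<mu>)) = integral\<^sup>L \<mu> \<phi>"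
proof -
  interpret prob_space \<mu> by fact
  define F where "F k = (if k = i then \<phi> else (\<lambda>_. 1))" for k
  have eq: "(\<Prod>k<N. F k (ys k)) = \<phi> (ys i)" for ys
    using i by (subst prod_one[of _ i]) (auto simp: F_def)
  have eq2: "(\<Prod>k<N. integral\<^sup>L \<mu> (F k)) = integral\<^sup>L \<mu> \<phi>"
    using i by (subst prod_one[of _ i]) (auto simp: F_def prob_space)
  have iF: "\<And>k. k < N \<Longrightarrow> integrable \<mu> (F k)" using int by (auto simp: F_def)
  show "integrable (PiM {..<N} (\<lambda>_. \<mu>)) (\<lambda>ys. \<phi> (ys i))"
    using pim_prod_facts(1)[where N=N and F=F, OF P iF] by (simp add: eq)
  show "(\<integral>ys. \<phi> (ys i) \<partial>PiM {..<N} (\<lambda>_. \<mu>)) = integral\<^sup>L \<mu> \<phi>"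
    using pim_prod_facts(2)[where N=N and F=F, OF P iF] by (simp add: eq eq2)
qed

lemma pim_pair:
  fixes \<phi> \<psi> :: "'y \<Rightarrow> real" and N :: nat
  assumes P: "prob_space \<mu>" and int: "integrable \<mu> \<phi>" "integrable \<mu> \<psi>" and i: "i < N" "j < N" "i \<noteq> j"
  shows "integrable (PiM {..<N} (\<lambda>_. \<mu>)) (\<lambda>ys. \<phi> (ys i) * \<psi> (ys j))"
    "(\<integral>ys. \<phi> (ys i) * \<psi> (ys j) \<partial>PiM {..<N} (\<lambda>_. \<mu>)) = integral\<^sup>L \<mu> \<phi> * integral\<^sup>L \<mu> \<psi>"
proof -
  interpret prob_space \<mu> by fact
  define F where "F k = (if k = i then \<phi> else if k = j then \<psi> else (\<lambda>_. 1))" for k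
  have eq: "(\<Prod>k<N. F k (ys k)) = \<phi> (ys i) * \<psi> (ys j)" for ys
    using i by (subst prod_two[of _ i j]) (auto simp: F_def)
  have eq2: "(\<Prod>k<N. integral\<^sup>L \<mu> (F k)) = integral\<^sup>L \<mu> \<phi> * integral\<^sup>L \<mu> \<psi>"
    using i by (subst prod_two[of _ i j]) (auto simp: F_def prob_space)
  have iF: "\<And>k. k < N \<Longrightarrow> integrable \<mu> (F k)" using int by (auto simp: F_def)
  show "integrable (PiM {..<N} (\<lambda>_. \<mu>)) (\<lambda>ys. \<phi> (ys i) * \<psi> (ys j))"
    using pim_prod_facts(1)[where N=N and F=F, OF P iF] by (simp add: eq)
  show "(\<integral>ys. \<phi> (ys i) * \<psi> (ys j) \<partial>PiM {..<N} (\<lambda>_. \<mu>)) = integral\<^sup>L \<mu> \<phi> * integral\<^sup>L \<mu> \<psi>"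
    using pim_prod_facts(2)[where N=N and F=F, OF P iF] by (simp add: eq eq2)
qed

lemma integrable_centered_prod:
  fixes f g :: "'y \<Rightarrow> real"
  assumes "finite_measure \<mu>" "integrable \<mu> f" "integrable \<mu> g" "integrable \<mu> (\<lambda>y. f y * g y)"
  shows "integrable \<mu> (\<lambda>y. (f y - a) * (g y - b))"
proof -
  interpret finite_measure \<mu> by fact
  have eq: "(\<lambda>y. (f y - a) * (g y - b)) = (\<lambda>y. f y * g y - b * f y - a * g y + a * b)"
    by (auto simp: algebra_simps)
  show ?thesis unfolding eq using assms by auto
qed

lemma cov_sum_iid:
  fixes f g :: "'y \<Rightarrow> real" and N :: nat
  assumes P: "prob_space \<mu>" and int: "integrable \<mu> f" "integrable \<mu> g" "integrable \<mu> (\<lambda>y. f y * g y)"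
  shows "covariance (PiM {..<N} (\<lambda>_. \<mu>)) (\<lambda>ys. c + (\<Sum>i<N. f (ys i))) (\<lambda>ys. d + (\<Sum>i<N. g (ys i)))
     = real N * covariance \<mu> f g"
proof -
  interpret prob_space \<mu> by fact
  let ?P = "PiM {..<N} (\<lambda>_. \<mu>)"
  interpret Q: prob_space ?P by (intro prob_space_PiM) (auto simp: prob_space_axioms)
  define f0 where "f0 y = f y - integral\<^sup>L \<mu> f" for y
  define g0 where "g0 y = g y - integral\<^sup>L \<mu> g" for y
  have if0: "integrable \<mu> f0" "integrable \<mu> g0" unfolding f0_def g0_def using int by (auto intro!: Bochner_Integration.integrable_diff)
  have zf: "integral\<^sup>L \<mu> f0 = 0" "integral\<^sup>L \<mu> g0 = 0"
    unfolding f0_def g0_def using int by (simp_all add: Bochner_Integration.integral_diff prob_space)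
  have ifg0: "integrable \<mu> (\<lambda>y. f0 y * g0 y)" unfolding f0_def g0_def
    by (rule integrable_centered_prod) (use int in \<open>auto intro: finite_measure_axioms\<close>)
  have E: "(\<integral>ys. c + (\<Sum>i<N. h (ys i)) \<partial>?P) = c + real N * integral\<^sup>L \<mu> h"
    if ih: "integrable \<mu> h" for h :: "'y \<Rightarrow> real" and c
  proof -
    have i1: "integrable ?P (\<lambda>ys. \<Sum>i<N. h (ys i))"
      using pim_single(1)[where N=N, OF P ih] by auto
    have "(\<integral>ys. c + (\<Sum>i<N. h (ys i)) \<partial>?P) = c + (\<Sum>i<N. \<integral>ys. h (ys i) \<partial>?P)"
      using i1 pim_single(1)[where N=N, OF P ih]
      by (simp add: Bochner_Integration.integral_add Bochner_Integration.integral_sum Q.prob_space)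
    then show ?thesis using pim_single(2)[where N=N, OF P ih] by simp
  qed
  note EX = E[OF int(1), of c] and EY = E[OF int(2), of d]
  have eqX: "c + (\<Sum>i<N. f (ys i)) - (c + real N * integral\<^sup>L \<mu> f) = (\<Sum>i<N. f0 (ys i))" for ys
    by (simp add: f0_def sum_subtractf)
  have eqY: "d + (\<Sum>i<N. g (ys i)) - (d + real N * integral\<^sup>L \<mu> g) = (\<Sum>i<N. g0 (ys i))" for ys
    by (simp add: g0_def sum_subtractf)
  have ipair: "integrable ?P (\<lambda>ys. f0 (ys i) * g0 (ys j))" and
    vpair: "(\<integral>ys. f0 (ys i) * g0 (ys j) \<partial>?P) = (if i = j then covariance \<mu> f g else 0)"
    if "i < N" "j < N" for i j
  proof -
    have "integrable ?P (\<lambda>ys. f0 (ys i) * g0 (ys j)) \<and>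
       (\<integral>ys. f0 (ys i) * g0 (ys j) \<partial>?P) = (if i = j then covariance \<mu> f g else 0)"
    proof (cases "i = j")
      case True
      then show ?thesis using pim_single[where N=N, OF P ifg0 that(1)]
        by (simp add: covariance_def f0_def g0_def)
    next
      case False
      then show ?thesis using pim_pair[where N=N, OF P if0 that False] zf by simp
    qed
    then show "integrable ?P (\<lambda>ys. f0 (ys i) * g0 (ys j))"
      "(\<integral>ys. f0 (ys i) * g0 (ys j) \<partial>?P) = (if i = j then covariance \<mu> f g else 0)" by auto
  qed
  have "covariance ?P (\<lambda>ys. c + (\<Sum>i<N. f (ys i))) (\<lambda>ys. d + (\<Sum>i<N. g (ys i)))
      = (\<integral>ys. (\<Sum>i<N. f0 (ys i)) * (\<Sum>j<N. g0 (ys j)) \<partial>?P)"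
    unfolding covariance_def EX EY eqX eqY ..
  also have "\<dots> = (\<integral>ys. (\<Sum>i<N. \<Sum>j<N. f0 (ys i) * g0 (ys j)) \<partial>?P)"
    by (simp add: sum_product)
  also have "\<dots> = (\<Sum>i<N. \<integral>ys. (\<Sum>j<N. f0 (ys i) * g0 (ys j)) \<partial>?P)"
    by (rule Bochner_Integration.integral_sum) (use ipair in \<open>auto intro!: integrable_sum\<close>)
  also have "\<dots> = (\<Sum>i<N. \<Sum>j<N. (\<integral>ys. f0 (ys i) * g0 (ys j) \<partial>?P))"
    by (intro sum.cong refl Bochner_Integration.integral_sum) (use ipair in auto)
  also have "\<dots> = (\<Sum>i<N. \<Sum>j<N. (if i = j then covariance \<mu> f g else 0))"
    using vpair by simp
  also have "\<dots> = real N * covariance \<mu> f g" by simp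
  finally show ?thesis .
qed




lemma core_ineq:
  fixes G :: "'a \<Rightarrow> 'u \<Rightarrow> real" and C :: "'a \<Rightarrow> 'a \<Rightarrow> real"
  assumes "finite A" "finite I"
  shows "(\<Sum>u\<in>I. \<Sum>v\<in>I. (\<Sum>a\<in>A. \<Sum>b\<in>A. G a u * G b v * C a b)\<^sup>2)
     \<le> (\<Sum>a\<in>A. \<Sum>u\<in>I. (G a u)\<^sup>2)\<^sup>2 * (\<Sum>a\<in>A. \<Sum>b\<in>A. (C a b)\<^sup>2)"
proof -
  let ?CC = "\<Sum>a\<in>A. \<Sum>b\<in>A. (C a b)\<^sup>2"
  have cs: "(\<Sum>a\<in>A. \<Sum>b\<in>A. G a u * G b v * C a b)\<^sup>2 \<le> ?CC * (\<Sum>a\<in>A. \<Sum>b\<in>A. (G a u * G b v)\<^sup>2)" for u v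
  proof -
    have e1: "(\<Sum>a\<in>A. \<Sum>b\<in>A. G a u * G b v * C a b) = (\<Sum>z\<in>A\<times>A. C (fst z) (snd z) * (G (fst z) u * G (snd z) v))"
      by (subst sum.cartesian_product) (auto simp: case_prod_beta mult_ac intro!: sum.cong)
    have e2: "?CC = (\<Sum>z\<in>A\<times>A. (C (fst z) (snd z))\<^sup>2)"
      by (subst sum.cartesian_product) (auto simp: case_prod_beta intro!: sum.cong)
    have e3: "(\<Sum>a\<in>A. \<Sum>b\<in>A. (G a u * G b v)\<^sup>2) = (\<Sum>z\<in>A\<times>A. (G (fst z) u * G (snd z) v)\<^sup>2)"
      by (subst sum.cartesian_product) (auto simp: case_prod_beta intro!: sum.cong)
    show ?thesis unfolding e1 e2 e3 by (rule Cauchy_Schwarz_ineq_sum)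
  qed
  have "(\<Sum>u\<in>I. \<Sum>v\<in>I. (\<Sum>a\<in>A. \<Sum>b\<in>A. G a u * G b v * C a b)\<^sup>2)
      \<le> (\<Sum>u\<in>I. \<Sum>v\<in>I. ?CC * (\<Sum>a\<in>A. \<Sum>b\<in>A. (G a u * G b v)\<^sup>2))"
    by (intro sum_mono cs)
  also have "\<dots> = ?CC * (\<Sum>u\<in>I. \<Sum>v\<in>I. \<Sum>a\<in>A. \<Sum>b\<in>A. (G a u)\<^sup>2 * (G b v)\<^sup>2)"
    by (simp add: sum_distrib_left power_mult_distrib)
  also have "(\<Sum>u\<in>I. \<Sum>v\<in>I. \<Sum>a\<in>A. \<Sum>b\<in>A. (G a u)\<^sup>2 * (G b v)\<^sup>2)
      = (\<Sum>a\<in>A. \<Sum>u\<in>I. (G a u)\<^sup>2) * (\<Sum>b\<in>A. \<Sum>v\<in>I. (G b v)\<^sup>2)"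
  proof -
    have "(\<Sum>u\<in>I. \<Sum>v\<in>I. \<Sum>a\<in>A. \<Sum>b\<in>A. (G a u)\<^sup>2 * (G b v)\<^sup>2)
       = (\<Sum>u\<in>I. \<Sum>a\<in>A. \<Sum>v\<in>I. \<Sum>b\<in>A. (G a u)\<^sup>2 * (G b v)\<^sup>2)"
      by (intro sum.cong refl sum.swap)
    also have "\<dots> = (\<Sum>a\<in>A. \<Sum>u\<in>I. \<Sum>v\<in>I. \<Sum>b\<in>A. (G a u)\<^sup>2 * (G b v)\<^sup>2)"
      by (rule sum.swap)
    also have "\<dots> = (\<Sum>a\<in>A. \<Sum>u\<in>I. \<Sum>b\<in>A. \<Sum>v\<in>I. (G a u)\<^sup>2 * (G b v)\<^sup>2)"
      by (intro sum.cong refl sum.swap)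
    also have "\<dots> = (\<Sum>a\<in>A. \<Sum>u\<in>I. (G a u)\<^sup>2 * (\<Sum>b\<in>A. \<Sum>v\<in>I. (G b v)\<^sup>2))"
      by (simp add: sum_distrib_left)
    also have "\<dots> = (\<Sum>a\<in>A. \<Sum>u\<in>I. (G a u)\<^sup>2) * (\<Sum>b\<in>A. \<Sum>v\<in>I. (G b v)\<^sup>2)"
      by (simp add: sum_distrib_right)
    finally show ?thesis .
  qed
  finally show ?thesis by (simp add: power2_eq_square mult_ac)
qed

lemma sum_pairs: "(\<Sum>u\<in>P\<times>Q. g u) = (\<Sum>p\<in>P. \<Sum>q\<in>Q. g (p,q))"
  by (simp add: sum.cartesian_product)

lemma final_ineq:
  fixes H :: "nat \<Rightarrow> 'p \<Rightarrow> 'p \<Rightarrow> real" and C :: "nat \<Rightarrow> nat \<Rightarrow> real" and N :: real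
  assumes "finite P" "N > 0"
  shows "sqrt (\<Sum>p\<in>P. \<Sum>q\<in>P. \<Sum>r\<in>P. \<Sum>s\<in>P. ((1/N) * (\<Sum>a<m. \<Sum>b<m. H a p q * H b r s * C a b))\<^sup>2)
     \<le> (1/N) * (\<Sum>a<m. \<Sum>p\<in>P. \<Sum>q\<in>P. (H a p q)\<^sup>2) * sqrt (\<Sum>a<m. \<Sum>b<m. (C a b)\<^sup>2)"
proof -
  define G where "G a z = H a (fst z) (snd z)" for a z
  let ?S = "\<Sum>a<m. \<Sum>p\<in>P. \<Sum>q\<in>P. (H a p q)\<^sup>2"
  let ?CC = "\<Sum>a<m. \<Sum>b<m. (C a b)\<^sup>2"
  have e1: "(\<Sum>p\<in>P. \<Sum>q\<in>P. \<Sum>r\<in>P. \<Sum>s\<in>P. (\<Sum>a<m. \<Sum>b<m. H a p q * H b r s * C a b)\<^sup>2)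
     = (\<Sum>u\<in>P\<times>P. \<Sum>v\<in>P\<times>P. (\<Sum>a<m. \<Sum>b<m. G a u * G b v * C a b)\<^sup>2)"
    by (simp add: sum_pairs G_def)
  have e2: "?S = (\<Sum>a<m. \<Sum>u\<in>P\<times>P. (G a u)\<^sup>2)"
    by (simp add: sum_pairs G_def)
  have le: "(\<Sum>p\<in>P. \<Sum>q\<in>P. \<Sum>r\<in>P. \<Sum>s\<in>P. (\<Sum>a<m. \<Sum>b<m. H a p q * H b r s * C a b)\<^sup>2) \<le> ?S\<^sup>2 * ?CC"
    unfolding e1 e2 by (rule core_ineq) (use assms in auto)
  have Snn: "?S \<ge> 0" by (intro sum_nonneg) auto
  have "(\<Sum>p\<in>P. \<Sum>q\<in>P. \<Sum>r\<in>P. \<Sum>s\<in>P. ((1/N) * (\<Sum>a<m. \<Sum>b<m. H a p q * H b r s * C a b))\<^sup>2)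
      = (1/N)\<^sup>2 * (\<Sum>p\<in>P. \<Sum>q\<in>P. \<Sum>r\<in>P. \<Sum>s\<in>P. (\<Sum>a<m. \<Sum>b<m. H a p q * H b r s * C a b)\<^sup>2)"
    by (simp only: power_mult_distrib sum_distrib_left[of "(1/N)\<^sup>2"])
  also have "\<dots> \<le> (1/N)\<^sup>2 * (?S\<^sup>2 * ?CC)"
    by (rule mult_left_mono[OF le]) simp
  finally have "sqrt (\<Sum>p\<in>P. \<Sum>q\<in>P. \<Sum>r\<in>P. \<Sum>s\<in>P. ((1/N) * (\<Sum>a<m. \<Sum>b<m. H a p q * H b r s * C a b))\<^sup>2)
      \<le> sqrt ((1/N)\<^sup>2 * (?S\<^sup>2 * ?CC))" by (rule real_sqrt_le_mono)
  also have "\<dots> = (1/N) * ?S * sqrt ?CC"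
    using assms Snn by (simp add: real_sqrt_mult)
  finally show ?thesis .
qed

lemma cov_lin:
  fixes T :: "'y \<Rightarrow> nat \<Rightarrow> real"
  assumes fm: "finite_measure \<mu>" and i1: "\<And>a. a < m \<Longrightarrow> integrable \<mu> (\<lambda>y. T y a)"
    and i2: "\<And>a b. a < m \<Longrightarrow> b < m \<Longrightarrow> integrable \<mu> (\<lambda>y. T y a * T y b)"
  shows "covariance \<mu> (\<lambda>y. \<Sum>a<m. \<alpha> a * T y a) (\<lambda>y. \<Sum>b<m. \<beta> b * T y b)
    = (\<Sum>a<m. \<Sum>b<m. \<alpha> a * \<beta> b * covariance \<mu> (\<lambda>y. T y a) (\<lambda>y. T y b))"
proof -
  interpret finite_measure \<mu> by fact
  define E where "E a = integral\<^sup>L \<mu> (\<lambda>y. T y a)" for a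
  have lin: "integral\<^sup>L \<mu> (\<lambda>y. \<Sum>a<m. \<gamma> a * T y a) = (\<Sum>a<m. \<gamma> a * E a)" for \<gamma>
    unfolding E_def using i1 by (simp add: Bochner_Integration.integral_sum)
  have cen: "(\<Sum>a<m. \<gamma> a * T y a) - (\<Sum>a<m. \<gamma> a * E a) = (\<Sum>a<m. \<gamma> a * (T y a - E a))" for \<gamma> y
    by (simp add: sum_subtractf algebra_simps)
  have ic: "integrable \<mu> (\<lambda>y. (T y a - E a) * (T y b - E b))" if "a < m" "b < m" for a b
    by (rule integrable_centered_prod[OF fm i1[OF that(1)] i1[OF that(2)] i2[OF that]])
  have "covariance \<mu> (\<lambda>y. \<Sum>a<m. \<alpha> a * T y a) (\<lambda>y. \<Sum>b<m. \<beta> b * T y b)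
     = (\<integral>y. (\<Sum>a<m. \<alpha> a * (T y a - E a)) * (\<Sum>b<m. \<beta> b * (T y b - E b)) \<partial>\<mu>)"
    unfolding covariance_def lin cen ..
  also have "\<dots> = (\<integral>y. (\<Sum>a<m. \<Sum>b<m. \<alpha> a * \<beta> b * ((T y a - E a) * (T y b - E b))) \<partial>\<mu>)"
    by (simp add: sum_product mult_ac)
  also have "\<dots> = (\<Sum>a<m. \<integral>y. (\<Sum>b<m. \<alpha> a * \<beta> b * ((T y a - E a) * (T y b - E b))) \<partial>\<mu>)"
    by (rule Bochner_Integration.integral_sum) (use ic in \<open>auto intro!: integrable_sum\<close>)
  also have "\<dots> = (\<Sum>a<m. \<Sum>b<m. \<integral>y. \<alpha> a * \<beta> b * ((T y a - E a) * (T y b - E b)) \<partial>\<mu>)"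
    by (intro sum.cong refl Bochner_Integration.integral_sum) (use ic in auto)
  also have "\<dots> = (\<Sum>a<m. \<Sum>b<m. \<alpha> a * \<beta> b * covariance \<mu> (\<lambda>y. T y a) (\<lambda>y. T y b))"
    unfolding covariance_def E_def by simp
  finally show ?thesis .
qed




lemma quad_bound:
  fixes u k c e :: real
  assumes e: "e > 0" and kc: "\<bar>k - c\<bar> \<le> e/4"
  shows "exp (u*k) * (1 + \<bar>u\<bar>)\<^sup>2 \<le> (2 + 64/e\<^sup>2) * (exp (u*(c+e/2)) + exp (u*(c-e/2)))"
proof -
  define w where "w = e*\<bar>u\<bar>/4"
  have w0: "w \<ge> 0" using e by (simp add: w_def)
  have "1 + w + w\<^sup>2/2 \<le> exp w" using exp_lower_Taylor_quadratic[OF w0] .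
  then have w2: "w\<^sup>2 \<le> 2 * exp w" using w0 by simp
  have ex1: "1 \<le> exp w" using w0 by simp
  have u2: "u\<^sup>2 = 16 * w\<^sup>2 / e\<^sup>2" using e by (simp add: w_def power2_eq_square field_simps)
  have sq: "(1+\<bar>u\<bar>)\<^sup>2 \<le> 2 + 2*u\<^sup>2"
  proof -
    have e1: "(1+\<bar>u\<bar>)\<^sup>2 = 1 + 2*\<bar>u\<bar> + \<bar>u\<bar>\<^sup>2" by (simp add: power2_eq_square algebra_simps)
    have e2: "(\<bar>u\<bar> - 1)\<^sup>2 = \<bar>u\<bar>\<^sup>2 - 2*\<bar>u\<bar> + 1" by (simp add: power2_eq_square algebra_simps)
    have "0 \<le> (\<bar>u\<bar> - 1)\<^sup>2" by simp
    then show ?thesis using e1 e2 by simp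
  qed
  have "2*u\<^sup>2 = 32 * w\<^sup>2 / e\<^sup>2" using u2 by simp
  also have "\<dots> \<le> 32 * (2 * exp w) / e\<^sup>2"
    using w2 e by (intro divide_right_mono mult_left_mono) auto
  finally have "(1+\<bar>u\<bar>)\<^sup>2 \<le> 2 * exp w + 64 * exp w / e\<^sup>2" using sq ex1 by linarith
  then have A: "(1+\<bar>u\<bar>)\<^sup>2 \<le> (2 + 64/e\<^sup>2) * exp w" by (simp add: algebra_simps)
  have "u*k - u*c \<le> \<bar>u\<bar> * (e/4)"
  proof -
    have "u*k - u*c = u*(k-c)" by (simp add: algebra_simps)
    also have "\<dots> \<le> \<bar>u*(k-c)\<bar>" by simp
    also have "\<dots> = \<bar>u\<bar> * \<bar>k - c\<bar>" by (simp add: abs_mult)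
    also have "\<dots> \<le> \<bar>u\<bar> * (e/4)" using kc by (intro mult_left_mono) auto
    finally show ?thesis .
  qed
  then have B: "u*k + w \<le> u*c + e*\<bar>u\<bar>/2" by (simp add: w_def algebra_simps)
  have C: "exp (u*c + e*\<bar>u\<bar>/2) \<le> exp (u*(c+e/2)) + exp (u*(c-e/2))"
  proof (cases "u \<ge> 0")
    case True
    then have "u*c + e*\<bar>u\<bar>/2 = u*(c+e/2)" by (simp add: algebra_simps)
    then show ?thesis by simp
  next
    case False
    then have "u*c + e*\<bar>u\<bar>/2 = u*(c-e/2)" by (simp add: algebra_simps)
    then show ?thesis by simp
  qed
  have "exp (u*k) * (1 + \<bar>u\<bar>)\<^sup>2 \<le> exp (u*k) * ((2 + 64/e\<^sup>2) * exp w)"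
    using A by (intro mult_left_mono) auto
  also have "\<dots> = (2 + 64/e\<^sup>2) * exp (u*k + w)" by (simp add: exp_add)
  also have "\<dots> \<le> (2 + 64/e\<^sup>2) * exp (u*c + e*\<bar>u\<bar>/2)"
    using B e by (intro mult_left_mono) (auto simp: add_pos_nonneg)
  also have "\<dots> \<le> (2 + 64/e\<^sup>2) * (exp (u*(c+e/2)) + exp (u*(c-e/2)))"
    using C e by (intro mult_left_mono) (auto simp: add_pos_nonneg)
  finally show ?thesis .
qed

lemma factor_le_prod:
  fixes g :: "'a \<Rightarrow> real"
  assumes "finite A" "c \<in> A" "\<And>x. x \<in> A \<Longrightarrow> 1 \<le> g x"
  shows "g c \<le> prod g A"
proof -
  have "prod g A = g c * prod g (A - {c})" using assms by (intro prod.remove) auto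
  moreover have "1 \<le> prod g (A - {c})" using assms by (intro prod_ge_1) auto
  moreover have "0 \<le> g c" using assms(3)[OF assms(2)] by simp
  ultimately have "g c * 1 \<le> g c * prod g (A - {c})" by (intro mult_left_mono) auto
  then show ?thesis using \<open>prod g A = g c * prod g (A - {c})\<close> by simp
qed

lemma mult_le_max_sq: assumes "0 \<le> (x::real)" "0 \<le> y" shows "x * y \<le> max (x\<^sup>2) (y\<^sup>2)"
proof (cases "x \<le> y")
  case True
  then have "x * y \<le> y * y" using assms by (intro mult_right_mono) auto
  then show ?thesis by (simp add: power2_eq_square)
next
  case False
  then have "x * y \<le> x * x" using assms by (intro mult_left_mono) auto
  then show ?thesis by (simp add: power2_eq_square)
qed

context
  fixes \<nu> :: "'y measure" and t :: "'y \<Rightarrow> nat \<Rightarrow> real" and m :: nat and h0 :: "nat \<Rightarrow> real" and \<epsilon> :: real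
  assumes tmeas: "\<And>a. a < m \<Longrightarrow> (\<lambda>y. t y a) \<in> borel_measurable \<nu>"
    and eps: "\<epsilon> > 0"
    and fin: "\<And>h'. (\<forall>a<m. \<bar>h' a - h0 a\<bar> < \<epsilon>) \<Longrightarrow> (\<integral>\<^sup>+y. ennreal (exp (\<Sum>a<m. t y a * h' a)) \<partial>\<nu>) < \<infinity>"
begin

lemma meas_lin: "(\<lambda>y. \<Sum>a<m. t y a * h a) \<in> borel_measurable \<nu>"
  using tmeas by (intro borel_measurable_sum borel_measurable_times) auto

lemma meas_exp: "(\<lambda>y. exp (\<Sum>a<m. t y a * h a)) \<in> borel_measurable \<nu>"
  using measurable_compose[OF meas_lin borel_measurable_exp] by simp

lemma int_exp: "(\<forall>a<m. \<bar>h a - h0 a\<bar> < \<epsilon>) \<Longrightarrow> integrable \<nu> (\<lambda>y. exp (\<Sum>a<m. t y a * h a))"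
  by (rule integrableI_bounded) (use meas_exp fin in auto)

definition Dm :: "'y \<Rightarrow> real" where
  "Dm y = (\<Prod>a<m. exp (t y a * (h0 a + \<epsilon>/2)) + exp (t y a * (h0 a - \<epsilon>/2)))"

lemma int_Dm: "integrable \<nu> Dm"
proof -
  have eq: "Dm y = (\<Sum>B\<in>Pow {..<m}. exp (\<Sum>a<m. t y a * (if a \<in> B then h0 a + \<epsilon>/2 else h0 a - \<epsilon>/2)))" for y
  proof -
    have "Dm y = (\<Sum>B\<in>Pow {..<m}. (\<Prod>a\<in>B. exp (t y a * (h0 a + \<epsilon>/2))) * (\<Prod>a\<in>{..<m}-B. exp (t y a * (h0 a - \<epsilon>/2))))"
      unfolding Dm_def by (rule prod_add) simp
    also have "\<dots> = (\<Sum>B\<in>Pow {..<m}. exp (\<Sum>a<m. t y a * (if a \<in> B then h0 a + \<epsilon>/2 else h0 a - \<epsilon>/2)))"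
    proof (rule sum.cong[OF refl])
      fix B assume B: "B \<in> Pow {..<m}"
      have "exp (\<Sum>a<m. t y a * (if a \<in> B then h0 a + \<epsilon>/2 else h0 a - \<epsilon>/2))
          = (\<Prod>a<m. (if a \<in> B then exp (t y a * (h0 a + \<epsilon>/2)) else exp (t y a * (h0 a - \<epsilon>/2))))"
        by (simp add: exp_sum if_distrib)
      also have "\<dots> = (\<Prod>a\<in>{..<m} \<inter> {a. a \<in> B}. exp (t y a * (h0 a + \<epsilon>/2))) * (\<Prod>a\<in>{..<m} \<inter> - {a. a \<in> B}. exp (t y a * (h0 a - \<epsilon>/2)))"
        by (rule prod.If_cases) simp
      also have "{..<m} \<inter> {a. a \<in> B} = B" using B by auto
      also have "{..<m} \<inter> - {a. a \<in> B} = {..<m} - B" by auto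
      finally show "(\<Prod>a\<in>B. exp (t y a * (h0 a + \<epsilon>/2))) * (\<Prod>a\<in>{..<m}-B. exp (t y a * (h0 a - \<epsilon>/2)))
          = exp (\<Sum>a<m. t y a * (if a \<in> B then h0 a + \<epsilon>/2 else h0 a - \<epsilon>/2))" by simp
    qed
    finally show ?thesis .
  qed
  show ?thesis unfolding eq[abs_def]
    by (rule Bochner_Integration.integrable_sum, rule int_exp) (use eps in auto)
qed

lemma Dm_nonneg: "0 \<le> Dm y"
  unfolding Dm_def by (intro prod_nonneg) (auto intro: add_nonneg_nonneg)

abbreviation "Kc \<equiv> 2 + 64/\<epsilon>\<^sup>2"

lemma bound_main:
  assumes box: "\<forall>c<m. \<bar>h c - h0 c\<bar> \<le> \<epsilon>/4" and a: "a < m" and b: "b < m"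
  shows "exp (\<Sum>c<m. t y c * h c) * ((1 + \<bar>t y a\<bar>) * (1 + \<bar>t y b\<bar>)) \<le> Kc ^ m * Dm y"
proof -
  have p: "exp (\<Sum>c<m. t y c * h c) * (\<Prod>c<m. (1 + \<bar>t y c\<bar>)\<^sup>2) \<le> Kc ^ m * Dm y"
  proof -
    have "exp (\<Sum>c<m. t y c * h c) * (\<Prod>c<m. (1 + \<bar>t y c\<bar>)\<^sup>2) = (\<Prod>c<m. exp (t y c * h c) * (1 + \<bar>t y c\<bar>)\<^sup>2)"
      by (simp add: exp_sum prod.distrib)
    also have "\<dots> \<le> (\<Prod>c<m. Kc * (exp (t y c * (h0 c + \<epsilon>/2)) + exp (t y c * (h0 c - \<epsilon>/2))))"
      by (intro prod_mono conjI mult_nonneg_nonneg quad_bound eps) (use box in auto)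
    also have "\<dots> = Kc ^ m * Dm y" by (simp add: prod.distrib Dm_def)
    finally show ?thesis .
  qed
  have g1: "\<And>c. c \<in> {..<m} \<Longrightarrow> 1 \<le> (1 + \<bar>t y c\<bar>)\<^sup>2" by (intro one_le_power) simp
  have "(1 + \<bar>t y a\<bar>) * (1 + \<bar>t y b\<bar>) \<le> max ((1 + \<bar>t y a\<bar>)\<^sup>2) ((1 + \<bar>t y b\<bar>)\<^sup>2)"
    by (rule mult_le_max_sq) auto
  also have "\<dots> \<le> (\<Prod>c<m. (1 + \<bar>t y c\<bar>)\<^sup>2)"
    using factor_le_prod[where A="{..<m}" and c=a and g="\<lambda>c. (1 + \<bar>t y c\<bar>)\<^sup>2", OF _ _ g1]
      factor_le_prod[where A="{..<m}" and c=b and g="\<lambda>c. (1 + \<bar>t y c\<bar>)\<^sup>2", OF _ _ g1] a b by simp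
  finally have q: "(1 + \<bar>t y a\<bar>) * (1 + \<bar>t y b\<bar>) \<le> (\<Prod>c<m. (1 + \<bar>t y c\<bar>)\<^sup>2)" .
  have "exp (\<Sum>c<m. t y c * h c) * ((1 + \<bar>t y a\<bar>) * (1 + \<bar>t y b\<bar>)) \<le> exp (\<Sum>c<m. t y c * h c) * (\<Prod>c<m. (1 + \<bar>t y c\<bar>)\<^sup>2)"
    using q by (intro mult_left_mono) auto
  with p show ?thesis by linarith
qed

lemma int_KD: "integrable \<nu> (\<lambda>y. C * Dm y)"
  using int_Dm by simp

lemma int_weighted:
  assumes box: "\<forall>c<m. \<bar>h c - h0 c\<bar> \<le> \<epsilon>/4" and a: "a < m" and b: "b < m"
    and wm: "w \<in> borel_measurable \<nu>" and wb: "\<And>y. \<bar>w y\<bar> \<le> (1 + \<bar>t y a\<bar>) * (1 + \<bar>t y b\<bar>)"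
  shows "integrable \<nu> (\<lambda>y. exp (\<Sum>c<m. t y c * h c) * w y)"
proof (rule Bochner_Integration.integrable_bound[OF int_KD[of "Kc ^ m"]])
  show "(\<lambda>y. exp (\<Sum>c<m. t y c * h c) * w y) \<in> borel_measurable \<nu>"
    using meas_exp wm by measurable
  show "AE y in \<nu>. norm (exp (\<Sum>c<m. t y c * h c) * w y) \<le> norm (Kc ^ m * Dm y)"
  proof (rule AE_I2)
    fix y
    have "norm (exp (\<Sum>c<m. t y c * h c) * w y) = exp (\<Sum>c<m. t y c * h c) * \<bar>w y\<bar>" by (simp add: abs_mult)
    also have "\<dots> \<le> exp (\<Sum>c<m. t y c * h c) * ((1 + \<bar>t y a\<bar>) * (1 + \<bar>t y b\<bar>))"
      using wb by (intro mult_left_mono) auto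
    also have "\<dots> \<le> Kc ^ m * Dm y" by (rule bound_main[OF box a b])
    also have "\<dots> = norm (Kc ^ m * Dm y)" using Dm_nonneg eps by simp
    finally show "norm (exp (\<Sum>c<m. t y c * h c) * w y) \<le> norm (Kc ^ m * Dm y)" .
  qed
qed

lemma curve_deriv:
  fixes c c' :: "real \<Rightarrow> nat \<Rightarrow> real" and w :: "'y \<Rightarrow> real"
  assumes r: "r > 0"
    and box: "\<And>v a. v \<in> ball v0 r \<Longrightarrow> a < m \<Longrightarrow> \<bar>c v a - h0 a\<bar> \<le> \<epsilon>/4"
    and dc: "\<And>v a. v \<in> ball v0 r \<Longrightarrow> a < m \<Longrightarrow> ((\<lambda>u. c u a) has_real_derivative c' v a) (at v)"
    and bc: "\<And>v a. v \<in> ball v0 r \<Longrightarrow> a < m \<Longrightarrow> \<bar>c' v a\<bar> \<le> M"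
    and wm: "w \<in> borel_measurable \<nu>" and wb: "\<And>y. \<bar>w y\<bar> \<le> 1 + \<bar>t y b\<bar>" and b: "b < m"
  shows "((\<lambda>v. \<integral>y. exp (\<Sum>a<m. t y a * c v a) * w y \<partial>\<nu>) has_real_derivative
          (\<integral>y. exp (\<Sum>a<m. t y a * c v0 a) * w y * (\<Sum>a<m. t y a * c' v0 a) \<partial>\<nu>)) (at v0)"
proof (rule leibniz_real[where D = "\<lambda>y. (real m * M * Kc ^ m) * Dm y", OF r])
  have v0: "v0 \<in> ball v0 r" using r by simp
  have M0: "0 \<le> M" using bc[OF v0 b] by linarith
  show "((\<lambda>u. exp (\<Sum>a<m. t y a * c u a) * w y) has_real_derivative
        exp (\<Sum>a<m. t y a * c v a) * w y * (\<Sum>a<m. t y a * c' v a)) (at v)"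
    if v: "v \<in> ball v0 r" for v y
  proof -
    have s: "((\<lambda>u. \<Sum>a<m. t y a * c u a) has_real_derivative (\<Sum>a<m. t y a * c' v a)) (at v)"
      by (intro DERIV_sum DERIV_cmult dc[OF v]) simp
    have "((\<lambda>u. exp (\<Sum>a<m. t y a * c u a)) has_real_derivative exp (\<Sum>a<m. t y a * c v a) * (\<Sum>a<m. t y a * c' v a)) (at v)"
      by (rule DERIV_chain2[OF DERIV_exp s])
    from DERIV_cmult_right[OF this, of "w y"] show ?thesis by (simp add: ac_simps)
  qed
  have wb2: "\<bar>w y\<bar> \<le> (1 + \<bar>t y b\<bar>) * (1 + \<bar>t y b\<bar>)" for y
  proof -
    have "1 + \<bar>t y b\<bar> \<le> (1 + \<bar>t y b\<bar>) * (1 + \<bar>t y b\<bar>)" by (simp add: algebra_simps)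
    then show ?thesis using wb[of y] by linarith
  qed
  show "integrable \<nu> (\<lambda>y. exp (\<Sum>a<m. t y a * c v a) * w y)" if v: "v \<in> ball v0 r" for v
    by (rule int_weighted[OF _ b b wm wb2]) (use box[OF v] in auto)
  show "(\<lambda>y. exp (\<Sum>a<m. t y a * c v0 a) * w y * (\<Sum>a<m. t y a * c' v0 a)) \<in> borel_measurable \<nu>"
    using meas_exp meas_lin wm by measurable
  show "integrable \<nu> (\<lambda>y. (real m * M * Kc ^ m) * Dm y)" by (rule int_KD)
  show "\<bar>exp (\<Sum>a<m. t y a * c v a) * w y * (\<Sum>a<m. t y a * c' v a)\<bar> \<le> (real m * M * Kc ^ m) * Dm y"
    if v: "v \<in> ball v0 r" for v y
  proof -
    let ?E = "exp (\<Sum>a<m. t y a * c v a)"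
    have bx: "\<forall>a<m. \<bar>c v a - h0 a\<bar> \<le> \<epsilon>/4" using box[OF v] by auto
    have "\<bar>?E * w y * (\<Sum>a<m. t y a * c' v a)\<bar> = ?E * \<bar>w y\<bar> * \<bar>\<Sum>a<m. t y a * c' v a\<bar>"
      by (simp add: abs_mult)
    also have "\<dots> \<le> ?E * (1 + \<bar>t y b\<bar>) * (\<Sum>a<m. (1 + \<bar>t y a\<bar>) * M)"
    proof (intro mult_mono mult_left_mono)
      show "\<bar>\<Sum>a<m. t y a * c' v a\<bar> \<le> (\<Sum>a<m. (1 + \<bar>t y a\<bar>) * M)"
      proof -
        have "\<bar>\<Sum>a<m. t y a * c' v a\<bar> \<le> (\<Sum>a<m. \<bar>t y a * c' v a\<bar>)" by (rule sum_abs)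
        also have "\<dots> \<le> (\<Sum>a<m. (1 + \<bar>t y a\<bar>) * M)"
        proof (rule sum_mono)
          fix a assume "a \<in> {..<m}"
          then have "\<bar>c' v a\<bar> \<le> M" using bc[OF v] by auto
          then show "\<bar>t y a * c' v a\<bar> \<le> (1 + \<bar>t y a\<bar>) * M"
            by (simp add: abs_mult) (intro mult_mono, auto)
        qed
        finally show ?thesis .
      qed
    qed (use wb M0 in \<open>auto intro!: sum_nonneg\<close>)
    also have "\<dots> = M * (\<Sum>a<m. ?E * ((1 + \<bar>t y a\<bar>) * (1 + \<bar>t y b\<bar>)))"
      by (simp add: sum_distrib_left sum_distrib_right ac_simps)
    also have "\<dots> \<le> M * (\<Sum>a<m. Kc ^ m * Dm y)"
      by (intro mult_left_mono sum_mono bound_main[OF bx _ b] M0) auto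
    also have "\<dots> = (real m * M * Kc ^ m) * Dm y" by simp
    finally show ?thesis .
  qed
qed

end




context
  fixes \<sigma> :: "real \<Rightarrow> real" and L :: nat and n :: "nat \<Rightarrow> nat" and x :: "nat \<Rightarrow> real"
    and \<nu> :: "'y measure" and t :: "'y \<Rightarrow> nat \<Rightarrow> real" and \<theta> :: params and \<epsilon> :: real
  assumes C2: "C2 \<sigma>"
    and tmeas: "\<And>a. a < n L \<Longrightarrow> (\<lambda>y. t y a) \<in> borel_measurable \<nu>"
    and eps: "\<epsilon> > 0"
    and fin: "\<And>h'. (\<forall>a<n L. \<bar>h' a - net_out \<sigma> L n \<theta> x a\<bar> < \<epsilon>) \<Longrightarrow>
        (\<integral>\<^sup>+y. ennreal (exp (\<Sum>a<n L. t y a * h' a)) \<partial>\<nu>) < \<infinity>"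
    and nonnull: "emeasure \<nu> (space \<nu>) \<noteq> 0"
    and m1: "n L \<ge> 1"
begin

abbreviation "hh W a \<equiv> net_out \<sigma> L n W x a"
abbreviation "pr r a \<equiv> partial r (\<lambda>W. net_out \<sigma> L n W x a)"

definition inbox :: "params \<Rightarrow> bool" where
  "inbox W \<longleftrightarrow> (\<forall>a<n L. \<bar>hh W a - hh \<theta> a\<bar> < \<epsilon>/4)"

definition Z :: "params \<Rightarrow> real" where
  "Z W = (\<integral>y. exp (\<Sum>a<n L. t y a * hh W a) \<partial>\<nu>)"
definition J :: "nat \<Rightarrow> params \<Rightarrow> real" where
  "J b W = (\<integral>y. exp (\<Sum>a<n L. t y a * hh W a) * t y b \<partial>\<nu>)"
definition Zd :: "nat\<times>nat\<times>nat \<Rightarrow> params \<Rightarrow> real" where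
  "Zd r W = (\<Sum>a<n L. pr r a W * J a W)"
definition gq :: "nat\<times>nat\<times>nat \<Rightarrow> params \<Rightarrow> real" where
  "gq r W = Zd r W / Z W"

lemma hD2: "D2 (\<lambda>W. hh W a)" by (rule net_out_D2[OF C2])

lemma inbox_theta: "inbox \<theta>" unfolding inbox_def using eps by simp

lemma inbox_nhd:
  assumes "inbox W"
  shows "\<exists>\<rho>>0. \<exists>M. \<forall>v\<in>ball (W r) \<rho>. inbox (W(r:=v)) \<and> (\<forall>a<n L. \<bar>pr r a (W(r:=v))\<bar> \<le> M)"
proof -
  define M where "M = (\<Sum>a<n L. \<bar>pr r a W\<bar>) + 1"
  define P where "P v a \<longleftrightarrow> \<bar>hh (W(r:=v)) a - hh W a\<bar> < \<epsilon>/4 - \<bar>hh W a - hh \<theta> a\<bar> \<and>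
      \<bar>pr r a (W(r:=v)) - pr r a W\<bar> < 1" for v a
  have ev: "\<forall>a\<in>{..<n L}. eventually (\<lambda>v. P v a) (at (W r))"
  proof
    fix a assume a: "a \<in> {..<n L}"
    have c1: "((\<lambda>v. hh (W(r:=v)) a) \<longlongrightarrow> hh W a) (at (W r))"
      using D1_cont_upd[OF D2_D1[OF hD2], where W=W and p=r and u="W r"] unfolding isCont_def by simp
    have c2: "((\<lambda>v. pr r a (W(r:=v))) \<longlongrightarrow> pr r a W) (at (W r))"
      using D1_cont_upd[OF D2_D1p[OF hD2], where W=W and p=r and u="W r"] unfolding isCont_def by simp
    have pos: "\<epsilon>/4 - \<bar>hh W a - hh \<theta> a\<bar> > 0" using assms a unfolding inbox_def by auto
    show "eventually (\<lambda>v. P v a) (at (W r))"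
      unfolding P_def using c1[unfolded tendsto_iff, rule_format, OF pos] c2[unfolded tendsto_iff, rule_format, of 1]
      by (auto simp: dist_real_def elim: eventually_elim2)
  qed
  have "eventually (\<lambda>v. \<forall>a\<in>{..<n L}. P v a) (at (W r))"
    by (rule eventually_ball_finite) (use ev in auto)
  then obtain d where d: "d > 0" "\<And>v. v \<noteq> W r \<Longrightarrow> dist v (W r) < d \<Longrightarrow> \<forall>a\<in>{..<n L}. P v a"
    unfolding eventually_at by auto
  have Pall: "\<forall>a\<in>{..<n L}. P v a" if "v \<in> ball (W r) d" for v
  proof (cases "v = W r")
    case True
    then show ?thesis using assms eps unfolding P_def inbox_def by auto
  next
    case False
    then show ?thesis using d that by (auto simp: dist_commute)
  qed
  have "\<forall>v\<in>ball (W r) d. inbox (W(r:=v)) \<and> (\<forall>a<n L. \<bar>pr r a (W(r:=v))\<bar> \<le> M)"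
  proof (intro ballI conjI allI impI)
    fix v assume v: "v \<in> ball (W r) d"
    show "inbox (W(r:=v))" unfolding inbox_def
    proof (intro allI impI)
      fix a assume a: "a < n L"
      then have "P v a" using Pall[OF v] by auto
      then show "\<bar>hh (W(r:=v)) a - hh \<theta> a\<bar> < \<epsilon>/4" unfolding P_def by linarith
    qed
    fix a assume a: "a < n L"
    then have "P v a" using Pall[OF v] by auto
    then have "\<bar>pr r a (W(r:=v))\<bar> \<le> \<bar>pr r a W\<bar> + 1" unfolding P_def by linarith
    also have "\<bar>pr r a W\<bar> \<le> (\<Sum>a<n L. \<bar>pr r a W\<bar>)"
      using a by (intro member_le_sum) auto
    finally show "\<bar>pr r a (W(r:=v))\<bar> \<le> M" unfolding M_def by linarith
  qed
  then show ?thesis using d by blast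
qed

lemma curve_W:
  assumes W: "inbox W" and wm: "w \<in> borel_measurable \<nu>" and wb: "\<And>y. \<bar>w y\<bar> \<le> 1 + \<bar>t y b\<bar>" and b: "b < n L"
  shows "((\<lambda>v. \<integral>y. exp (\<Sum>a<n L. t y a * hh (W(r:=v)) a) * w y \<partial>\<nu>) has_real_derivative
          (\<integral>y. exp (\<Sum>a<n L. t y a * hh W a) * w y * (\<Sum>a<n L. t y a * pr r a W) \<partial>\<nu>)) (at (W r))"
proof -
  obtain \<rho> M where \<rho>: "\<rho> > 0" and bx: "\<And>v. v \<in> ball (W r) \<rho> \<Longrightarrow> inbox (W(r:=v)) \<and> (\<forall>a<n L. \<bar>pr r a (W(r:=v))\<bar> \<le> M)"
    using inbox_nhd[OF W, of r] by blast
  have "((\<lambda>v. \<integral>y. exp (\<Sum>a<n L. t y a * hh (W(r:=v)) a) * w y \<partial>\<nu>) has_real_derivative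
          (\<integral>y. exp (\<Sum>a<n L. t y a * hh (W(r:=W r)) a) * w y * (\<Sum>a<n L. t y a * pr r a (W(r:=W r))) \<partial>\<nu>)) (at (W r))"
  proof (rule curve_deriv[OF tmeas eps fin \<rho>, where M=M and b=b])
    show "\<bar>hh (W(r:=v)) a - hh \<theta> a\<bar> \<le> \<epsilon>/4" if "v \<in> ball (W r) \<rho>" "a < n L" for v a
      using bx[OF that(1)] that(2) unfolding inbox_def by force
    show "((\<lambda>u. hh (W(r:=u)) a) has_real_derivative pr r a (W(r:=v))) (at v)" for v a
      by (rule D1_lineD_upd[OF D2_D1[OF hD2]])
    show "\<bar>pr r a (W(r:=v))\<bar> \<le> M" if "v \<in> ball (W r) \<rho>" "a < n L" for v a
      using bx[OF that(1)] that(2) by blast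
  qed (use wm wb b in auto)
  then show ?thesis by simp
qed

lemma int_w:
  assumes W: "inbox W" and a: "a < n L" and b: "b < n L"
    and wm: "w \<in> borel_measurable \<nu>" and wb: "\<And>y. \<bar>w y\<bar> \<le> (1 + \<bar>t y a\<bar>) * (1 + \<bar>t y b\<bar>)"
  shows "integrable \<nu> (\<lambda>y. exp (\<Sum>c<n L. t y c * hh W c) * w y)"
  by (rule int_weighted[OF tmeas eps fin _ a b wm wb]) (use W in \<open>auto simp: inbox_def\<close>)

lemma Z_deriv:
  assumes W: "inbox W"
  shows "((\<lambda>v. Z (W(r:=v))) has_real_derivative Zd r W) (at (W r))"
proof -
  have "((\<lambda>v. \<integral>y. exp (\<Sum>a<n L. t y a * hh (W(r:=v)) a) * 1 \<partial>\<nu>) has_real_derivative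
          (\<integral>y. exp (\<Sum>a<n L. t y a * hh W a) * 1 * (\<Sum>a<n L. t y a * pr r a W) \<partial>\<nu>)) (at (W r))"
    by (rule curve_W[OF W, where b=0]) (use m1 in auto)
  moreover have "(\<integral>y. exp (\<Sum>a<n L. t y a * hh W a) * 1 * (\<Sum>a<n L. t y a * pr r a W) \<partial>\<nu>) = Zd r W"
  proof -
    have ia: "integrable \<nu> (\<lambda>y. exp (\<Sum>c<n L. t y c * hh W c) * t y a)" if a: "a < n L" for a
      by (rule int_w[OF W a a]) (use tmeas[OF a] in \<open>auto simp: algebra_simps\<close>)
    have "(\<integral>y. exp (\<Sum>a<n L. t y a * hh W a) * 1 * (\<Sum>a<n L. t y a * pr r a W) \<partial>\<nu>)
        = (\<integral>y. (\<Sum>a<n L. pr r a W * (exp (\<Sum>c<n L. t y c * hh W c) * t y a)) \<partial>\<nu>)"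
      by (simp add: sum_distrib_left ac_simps)
    also have "\<dots> = (\<Sum>a<n L. pr r a W * J a W)"
      unfolding J_def using ia by (simp add: Bochner_Integration.integral_sum)
    finally show ?thesis unfolding Zd_def .
  qed
  ultimately show ?thesis unfolding Z_def by simp
qed

lemma J_deriv:
  assumes W: "inbox W" and b: "b < n L"
  shows "\<exists>d. ((\<lambda>v. J b (W(r:=v))) has_real_derivative d) (at (W r))"
  unfolding J_def using curve_W[OF W tmeas[OF b] _ b, of r] by auto

lemma Z_pos:
  assumes W: "inbox W"
  shows "Z W > 0"
proof -
  have i: "integrable \<nu> (\<lambda>y. exp (\<Sum>a<n L. t y a * hh W a))"
    by (rule int_exp[OF tmeas eps fin]) (use W eps in \<open>auto simp: inbox_def\<close>)
  have nn: "Z W \<ge> 0" unfolding Z_def by (intro integral_nonneg_AE) auto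
  have "Z W \<noteq> 0"
  proof
    assume "Z W = 0"
    then have "AE y in \<nu>. exp (\<Sum>a<n L. t y a * hh W a) = 0"
      using integral_nonneg_eq_0_iff_AE[OF i] unfolding Z_def by auto
    then have "AE y in \<nu>. False" by simp
    then show False using nonnull ae_filter_eq_bot_iff[of \<nu>] trivial_limit_def by metis
  qed
  with nn show ?thesis by simp
qed

lemma G_lineD:
  assumes W: "inbox W"
  shows "lineD (\<lambda>W. log_partition \<nu> t (n L) (net_out \<sigma> L n W x)) r W (gq r W)"
proof -
  have eq: "log_partition \<nu> t (n L) (net_out \<sigma> L n W' x) = ln (Z W')" for W'
    unfolding log_partition_def Z_def ..
  have l: "(ln has_real_derivative 1 / Z (W(r:=W r))) (at (Z (W(r:=W r))))"
    using DERIV_ln_divide[OF Z_pos[OF W]] by simp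
  show ?thesis unfolding lineD_def eq gq_def
    using DERIV_chain2[OF l Z_deriv[OF W, of r]] by (simp add: field_simps)
qed

lemma gq_deriv:
  "\<exists>k. ((\<lambda>v. gq q (\<theta>(p:=v))) has_real_derivative k) (at (\<theta> p))"
proof -
  have "\<forall>b. \<exists>d. b < n L \<longrightarrow> ((\<lambda>v. J b (\<theta>(p:=v))) has_real_derivative d) (at (\<theta> p))"
    using J_deriv[OF inbox_theta] by blast
  then obtain dJ where dJ: "\<And>b. b < n L \<Longrightarrow> ((\<lambda>v. J b (\<theta>(p:=v))) has_real_derivative dJ b) (at (\<theta> p))"
    by metis
  have dP: "((\<lambda>v. pr q a (\<theta>(p:=v))) has_real_derivative partial p (pr q a) (\<theta>(p:=\<theta> p))) (at (\<theta> p))" for a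
    by (rule D1_lineD_upd[OF D2_D1p[OF hD2]])
  have f1: "((\<lambda>v. Zd q (\<theta>(p:=v))) has_real_derivative
      (\<Sum>a<n L. partial p (pr q a) (\<theta>(p:=\<theta> p)) * J a (\<theta>(p:=\<theta> p)) + dJ a * pr q a (\<theta>(p:=\<theta> p)))) (at (\<theta> p))"
    unfolding Zd_def by (intro DERIV_sum DERIV_mult dP dJ) simp
  have f2: "((\<lambda>v. Z (\<theta>(p:=v))) has_real_derivative Zd p \<theta>) (at (\<theta> p))"
    by (rule Z_deriv[OF inbox_theta])
  have f3: "Z (\<theta>(p:=\<theta> p)) \<noteq> 0" using Z_pos[OF inbox_theta] by simp
  show ?thesis unfolding gq_def using DERIV_divide[OF f1 f2 f3] by blast
qed

lemma I2_formula:
  "partial2 p q (loglik \<sigma> L n x \<nu> t y) \<theta>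
     = (\<Sum>a<n L. t y a * partial2 p q (\<lambda>W. hh W a) \<theta>) - deriv (\<lambda>v. gq q (\<theta>(p:=v))) (\<theta> p)"
proof -
  define A where "A W = (\<Sum>a<n L. t y a * hh W a)" for W
  have D1t: "D1 (\<lambda>W. t y a * hh W a)" for a by (intro D1_mult D1_const D2_D1[OF hD2])
  have DA: "D2 A" unfolding A_def by (intro D2_sum D2_mult D2_const hD2) simp
  have pA: "partial q A = (\<lambda>W. \<Sum>a<n L. t y a * pr q a W)"
    unfolding A_def partial_sum[OF finite_lessThan D1t]
    by (simp add: partial_mult partial_const D1_const D2_D1[OF hD2])
  have D1t2: "D1 (\<lambda>W. t y a * pr q a W)" for a by (intro D1_mult D1_const D2_D1p[OF hD2])
  have ppA: "partial p (partial q A) \<theta> = (\<Sum>a<n L. t y a * partial2 p q (\<lambda>W. hh W a) \<theta>)"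
    unfolding pA partial_sum[OF finite_lessThan D1t2] partial2_def
    by (simp add: partial_mult partial_const D1_const D2_D1p[OF hD2])
  have ll: "loglik \<sigma> L n x \<nu> t y = (\<lambda>W. A W - log_partition \<nu> t (n L) (net_out \<sigma> L n W x))"
    unfolding loglik_def A_def by (rule ext) simp
  have pl: "partial q (loglik \<sigma> L n x \<nu> t y) W' = partial q A W' - gq q W'" if W': "inbox W'" for W'
  proof -
    have "lineD (\<lambda>W. A W - log_partition \<nu> t (n L) (net_out \<sigma> L n W x)) q W' (partial q A W' - gq q W')"
      using D1_lineD[OF D2_D1[OF DA], of q W'] G_lineD[OF W', of q] unfolding lineD_def by (rule DERIV_diff)
    then show ?thesis unfolding ll by (rule lineD_partial)
  qed
  obtain \<rho> M where \<rho>: "\<rho> > 0" and bx: "\<And>v. v \<in> ball (\<theta> p) \<rho> \<Longrightarrow> inbox (\<theta>(p:=v))"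
    using inbox_nhd[OF inbox_theta, of p] by blast
  obtain k where k: "((\<lambda>v. gq q (\<theta>(p:=v))) has_real_derivative k) (at (\<theta> p))"
    using gq_deriv by blast
  have dpsi: "((\<lambda>v. partial q A (\<theta>(p:=v)) - gq q (\<theta>(p:=v))) has_real_derivative partial p (partial q A) \<theta> - k) (at (\<theta> p))"
    using DERIV_diff[OF D1_lineD_upd[OF D2_D1p[OF DA], where W=\<theta> and p=p and u="\<theta> p"] k] by simp
  have dphi: "((\<lambda>v. partial q (loglik \<sigma> L n x \<nu> t y) (\<theta>(p:=v))) has_real_derivative partial p (partial q A) \<theta> - k) (at (\<theta> p))"
    by (rule has_field_derivative_transform_within_open[OF dpsi, of "ball (\<theta> p) \<rho>"]) (use pl bx \<rho> in auto)
  have "partial2 p q (loglik \<sigma> L n x \<nu> t y) \<theta> = partial p (partial q A) \<theta> - k"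
    unfolding partial2_def partial_def[of p "partial q (loglik \<sigma> L n x \<nu> t y)"] using DERIV_imp_deriv[OF dphi] by simp
  moreover have "deriv (\<lambda>v. gq q (\<theta>(p:=v))) (\<theta> p) = k" by (rule DERIV_imp_deriv[OF k])
  ultimately show ?thesis using ppA by simp
qed

lemma I2_exists:
  "\<exists>K. \<forall>p q y. partial2 p q (loglik \<sigma> L n x \<nu> t y) \<theta>
     = (\<Sum>a<n L. t y a * partial2 p q (\<lambda>W. hh W a) \<theta>) - K p q"
  by (rule exI[of _ "\<lambda>p q. deriv (\<lambda>v. gq q (\<theta>(p:=v))) (\<theta> p)"]) (simp add: I2_formula)

lemma mu_facts:
  defines "\<mu> \<equiv> model_dist \<nu> t (n L) (net_out \<sigma> L n \<theta> x)"
  shows "prob_space \<mu>"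
    "\<And>a. a < n L \<Longrightarrow> integrable \<mu> (\<lambda>y. t y a)"
    "\<And>a b. a < n L \<Longrightarrow> b < n L \<Longrightarrow> integrable \<mu> (\<lambda>y. t y a * t y b)"
proof -
  define gd where "gd y = exp (\<Sum>a<n L. t y a * hh \<theta> a) / Z \<theta>" for y
  have Zp: "Z \<theta> > 0" by (rule Z_pos[OF inbox_theta])
  have lp: "log_partition \<nu> t (n L) (net_out \<sigma> L n \<theta> x) = ln (Z \<theta>)"
    unfolding log_partition_def Z_def ..
  have gd_eq: "exp ((\<Sum>a<n L. t y a * hh \<theta> a) - ln (Z \<theta>)) = gd y" for y
    unfolding gd_def using Zp by (simp add: exp_diff)
  have mu: "\<mu> = density \<nu> gd"
    unfolding \<mu>_def model_dist_def lp gd_eq by (simp add: gd_eq[abs_def])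
  have gdm: "gd \<in> borel_measurable \<nu>"
    unfolding gd_def using meas_exp[OF tmeas eps fin] by measurable
  have gdn: "AE y in \<nu>. 0 \<le> gd y" unfolding gd_def using Zp by auto
  have ie: "integrable \<nu> (\<lambda>y. exp (\<Sum>a<n L. t y a * hh \<theta> a))"
    by (rule int_exp[OF tmeas eps fin]) (use eps in auto)
  have igd: "integrable \<nu> gd" unfolding gd_def using ie by simp
  have "integral\<^sup>L \<nu> gd = Z \<theta> / Z \<theta>" unfolding gd_def Z_def by simp
  then have int1: "integral\<^sup>L \<nu> gd = 1" using Zp by simp
  show "prob_space \<mu>"
  proof (rule prob_spaceI)
    have "emeasure \<mu> (space \<mu>) = (\<integral>\<^sup>+ y. gd y \<partial>\<nu>)"
      unfolding mu using gdm by (subst emeasure_density) (auto intro!: nn_integral_cong simp: indicator_def)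
    also have "\<dots> = ennreal (integral\<^sup>L \<nu> gd)" by (rule nn_integral_eq_integral[OF igd gdn])
    finally show "emeasure \<mu> (space \<mu>) = 1" using int1 by simp
  qed
  have mom: "integrable \<mu> f" if fm: "f \<in> borel_measurable \<nu>" and a: "a < n L" and b: "b < n L"
    and fb: "\<And>y. \<bar>f y\<bar> \<le> (1 + \<bar>t y a\<bar>) * (1 + \<bar>t y b\<bar>)" for f a b
  proof -
    have "integrable \<nu> (\<lambda>y. exp (\<Sum>c<n L. t y c * hh \<theta> c) * f y)"
      by (rule int_w[OF inbox_theta a b fm fb])
    then have "integrable \<nu> (\<lambda>y. gd y *\<^sub>R f y)" unfolding gd_def by simp
    then show ?thesis unfolding mu using integrable_density[OF fm gdm gdn] by simp
  qed
  show "integrable \<mu> (\<lambda>y. t y a)" if a: "a < n L" for a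
  proof (rule mom[OF tmeas[OF a] a a])
    fix y
    have "\<bar>t y a\<bar> \<le> 1 + \<bar>t y a\<bar>" by simp
    also have "\<dots> \<le> (1 + \<bar>t y a\<bar>) * (1 + \<bar>t y a\<bar>)" by (simp add: algebra_simps)
    finally show "\<bar>t y a\<bar> \<le> (1 + \<bar>t y a\<bar>) * (1 + \<bar>t y a\<bar>)" .
  qed
  show "integrable \<mu> (\<lambda>y. t y a * t y b)" if a: "a < n L" and b: "b < n L" for a b
  proof (rule mom[OF _ a b])
    show "(\<lambda>y. t y a * t y b) \<in> borel_measurable \<nu>" using tmeas[OF a] tmeas[OF b] by measurable
    fix y
    have "\<bar>t y a * t y b\<bar> = \<bar>t y a\<bar> * \<bar>t y b\<bar>" by (simp add: abs_mult)
    also have "\<dots> \<le> (1 + \<bar>t y a\<bar>) * (1 + \<bar>t y b\<bar>)" by (intro mult_mono) auto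
    finally show "\<bar>t y a * t y b\<bar> \<le> (1 + \<bar>t y a\<bar>) * (1 + \<bar>t y b\<bar>)" .
  qed
qed

end




lemma param_index_finite: "finite (param_index L n)"
proof -
  have "param_index L n = (SIGMA l:{..<L}. {..<n (Suc l)} \<times> {..n l})"
    unfolding param_index_def by auto
  then show ?thesis by simp
qed

lemma null_sample_cov:
  fixes \<nu> :: "'y measure" and N :: nat
  assumes null: "emeasure \<nu> (space \<nu>) = 0" and N: "N \<ge> 1"
    and gm: "g \<in> borel_measurable \<nu>"
  shows "covariance (PiM {..<N} (\<lambda>_. density \<nu> g)) X Y = 0"
proof -
  let ?\<mu> = "density \<nu> g"
  have "AE y in \<nu>. False" using null ae_filter_eq_bot_iff[of \<nu>] trivial_limit_def by metis
  then have "AE y in \<nu>. 0 < g y \<longrightarrow> False" by (rule AE_mp) auto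
  then have "AE y in ?\<mu>. False" using AE_density[OF gm] by blast
  then have e0: "emeasure ?\<mu> (space ?\<mu>) = 0" using ae_filter_eq_bot_iff[of ?\<mu>] trivial_limit_def by metis
  interpret finite_measure ?\<mu> by (rule finite_measureI) (use e0 in simp)
  interpret product_sigma_finite "\<lambda>_. ?\<mu>" by unfold_locales
  have "emeasure (PiM {..<N} (\<lambda>_. ?\<mu>)) (space (PiM {..<N} (\<lambda>_. ?\<mu>))) = (\<Prod>i<N. emeasure ?\<mu> (space ?\<mu>))"
    unfolding space_PiM by (rule emeasure_PiM) auto
  also have "\<dots> = 0" using e0 N by (simp add: prod_zero_iff)
  finally have "AE ys in PiM {..<N} (\<lambda>_. ?\<mu>). False"
    using ae_filter_eq_bot_iff trivial_limit_def by metis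
  then show ?thesis unfolding covariance_def by (intro integral_eq_zero_AE) auto
qed

theorem mainTheorem7:
  fixes \<sigma> :: "real \<Rightarrow> real" and L :: nat and n :: "nat \<Rightarrow> nat" and x :: "nat \<Rightarrow> real"
    and \<nu> :: "'y measure" and t :: "'y \<Rightarrow> nat \<Rightarrow> real" and N :: nat and \<theta> :: params
  assumes "C2 \<sigma>"
    and "L \<ge> 1"
    and "\<forall>l\<in>{1..L}. n l \<ge> 1"
    and "N \<ge> 1"
    and "\<forall>a<n L. (\<lambda>y. t y a) \<in> borel_measurable \<nu>"
    and "nat_param_interior \<nu> t (n L) (net_out \<sigma> L n \<theta> x)"
  shows "sqrt (\<Sum>p\<in>param_index L n. \<Sum>q\<in>param_index L n. \<Sum>r\<in>param_index L n. \<Sum>s\<in>param_index L n.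
             (covariance (sample_law \<sigma> L n x \<nu> t N \<theta>)
                (I2hat \<sigma> L n x \<nu> t N \<theta> p q) (I2hat \<sigma> L n x \<nu> t N \<theta> r s))\<^sup>2)
         \<le> (1 / real N)
           * (\<Sum>a<n L. \<Sum>p\<in>param_index L n. \<Sum>q\<in>param_index L n.
                (partial2 p q (\<lambda>W. net_out \<sigma> L n W x a) \<theta>)\<^sup>2)
           * sqrt (\<Sum>a<n L. \<Sum>b<n L.
                (covariance (model_dist \<nu> t (n L) (net_out \<sigma> L n \<theta> x)) (\<lambda>y. t y a) (\<lambda>y. t y b))\<^sup>2)"
proof -
  have tmeas: "\<And>a. a < n L \<Longrightarrow> (\<lambda>y. t y a) \<in> borel_measurable \<nu>" using assms(5) by blast
  have m1: "n L \<ge> 1" using assms(2,3) by auto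
  obtain \<epsilon> where eps: "\<epsilon> > 0" and fin: "\<And>h'. (\<forall>a<n L. \<bar>h' a - net_out \<sigma> L n \<theta> x a\<bar> < \<epsilon>) \<Longrightarrow>
        (\<integral>\<^sup>+y. ennreal (exp (\<Sum>a<n L. t y a * h' a)) \<partial>\<nu>) < \<infinity>"
    using assms(6) unfolding nat_param_interior_def by blast
  define \<mu> where "\<mu> = model_dist \<nu> t (n L) (net_out \<sigma> L n \<theta> x)"
  define H where "H a p q = partial2 p q (\<lambda>W. net_out \<sigma> L n W x a) \<theta>" for a p q
  define C where "C a b = covariance \<mu> (\<lambda>y. t y a) (\<lambda>y. t y b)" for a b
  have Nr: "real N > 0" using assms(4) by simp
  have Pf: "finite (param_index L n)" by (rule param_index_finite)
  have ml: "(\<lambda>y. \<Sum>a<n L. t y a * c a) \<in> borel_measurable \<nu>" for c :: "nat \<Rightarrow> real"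
    using tmeas by (intro borel_measurable_sum borel_measurable_times) auto
  show ?thesis
  proof (cases "emeasure \<nu> (space \<nu>) = 0")
    case True
    have gm: "(\<lambda>y. ennreal (exp ((\<Sum>a<n L. t y a * net_out \<sigma> L n \<theta> x a) - log_partition \<nu> t (n L) (net_out \<sigma> L n \<theta> x)))) \<in> borel_measurable \<nu>"
      using ml[of "net_out \<sigma> L n \<theta> x"] by measurable
    have z: "covariance (sample_law \<sigma> L n x \<nu> t N \<theta>) X Y = 0" for X Y
      unfolding sample_law_def model_dist_def by (rule null_sample_cov[OF True assms(4) gm])
    have "0 \<le> (1 / real N) * (\<Sum>a<n L. \<Sum>p\<in>param_index L n. \<Sum>q\<in>param_index L n.
                (partial2 p q (\<lambda>W. net_out \<sigma> L n W x a) \<theta>)\<^sup>2)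
           * sqrt (\<Sum>a<n L. \<Sum>b<n L.
                (covariance (model_dist \<nu> t (n L) (net_out \<sigma> L n \<theta> x)) (\<lambda>y. t y a) (\<lambda>y. t y b))\<^sup>2)"
      by (intro mult_nonneg_nonneg sum_nonneg real_sqrt_ge_zero) auto
    then show ?thesis by (simp add: z)
  next
    case False
    obtain K where K: "\<And>p q y. partial2 p q (loglik \<sigma> L n x \<nu> t y) \<theta>
       = (\<Sum>a<n L. t y a * H a p q) - K p q"
      using I2_exists[where \<sigma>=\<sigma> and L=L and n=n and x=x and \<nu>=\<nu> and t=t and \<theta>=\<theta> and \<epsilon>=\<epsilon>, OF assms(1) tmeas eps fin False m1] unfolding H_def by blast
    have prob: "prob_space \<mu>" and it1: "\<And>a. a < n L \<Longrightarrow> integrable \<mu> (\<lambda>y. t y a)"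
      and it2: "\<And>a b. a < n L \<Longrightarrow> b < n L \<Longrightarrow> integrable \<mu> (\<lambda>y. t y a * t y b)"
      using mu_facts[where \<sigma>=\<sigma> and L=L and n=n and x=x and \<nu>=\<nu> and t=t and \<theta>=\<theta> and \<epsilon>=\<epsilon>, OF assms(1) tmeas eps fin False m1] unfolding \<mu>_def by auto
    have fm: "finite_measure \<mu>" using prob by (simp add: prob_space_def)
    define f where "f p q y = (\<Sum>a<n L. (- H a p q / real N) * t y a)" for p q y
    have I2eq: "I2hat \<sigma> L n x \<nu> t N \<theta> p q = (\<lambda>ys. K p q + (\<Sum>i<N. f p q (ys i)))" for p q
    proof
      fix ys :: "nat \<Rightarrow> 'y"
      have "I2hat \<sigma> L n x \<nu> t N \<theta> p q ys = (1 / real N) * (\<Sum>i<N. K p q - (\<Sum>a<n L. t (ys i) a * H a p q))"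
        unfolding I2hat_def K by simp
      also have "\<dots> = (1 / real N) * (real N * K p q) - (\<Sum>i<N. (\<Sum>a<n L. t (ys i) a * H a p q) / real N)"
        by (simp add: sum_subtractf sum_divide_distrib right_diff_distrib)
      also have "\<dots> = K p q + (\<Sum>i<N. f p q (ys i))"
        using Nr by (simp add: f_def sum_negf sum_divide_distrib[symmetric] sum_distrib_left mult_ac)
      finally show "I2hat \<sigma> L n x \<nu> t N \<theta> p q ys = K p q + (\<Sum>i<N. f p q (ys i))" .
    qed
    have ifp: "integrable \<mu> (f p q)" for p q
      unfolding f_def using it1 by (intro Bochner_Integration.integrable_sum) auto
    have iff: "integrable \<mu> (\<lambda>y. f p q y * f r s y)" for p q r s
    proof -
      have "(\<lambda>y. f p q y * f r s y) = (\<lambda>y. \<Sum>a<n L. \<Sum>b<n L. ((- H a p q / real N) * (- H b r s / real N)) * (t y a * t y b))"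
        unfolding f_def by (simp add: sum_product mult_ac)
      moreover have "integrable \<mu> (\<lambda>y. \<Sum>a<n L. \<Sum>b<n L. ((- H a p q / real N) * (- H b r s / real N)) * (t y a * t y b))"
        by (intro Bochner_Integration.integrable_sum integrable_mult_right) (use it2 in auto)
      ultimately show ?thesis by simp
    qed
    have cov: "covariance (sample_law \<sigma> L n x \<nu> t N \<theta>) (I2hat \<sigma> L n x \<nu> t N \<theta> p q) (I2hat \<sigma> L n x \<nu> t N \<theta> r s)
       = (1 / real N) * (\<Sum>a<n L. \<Sum>b<n L. H a p q * H b r s * C a b)" for p q r s
    proof -
      have "covariance (sample_law \<sigma> L n x \<nu> t N \<theta>) (I2hat \<sigma> L n x \<nu> t N \<theta> p q) (I2hat \<sigma> L n x \<nu> t N \<theta> r s)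
          = real N * covariance \<mu> (f p q) (f r s)"
        unfolding I2eq sample_law_def \<mu>_def[symmetric]
        by (rule cov_sum_iid[OF prob ifp ifp iff])
      also have "covariance \<mu> (f p q) (f r s) = (\<Sum>a<n L. \<Sum>b<n L. (- H a p q / real N) * (- H b r s / real N) * C a b)"
        unfolding f_def[abs_def] C_def by (rule cov_lin[OF fm it1 it2])
      also have "real N * (\<Sum>a<n L. \<Sum>b<n L. (- H a p q / real N) * (- H b r s / real N) * C a b)
          = (1 / real N) * (\<Sum>a<n L. \<Sum>b<n L. H a p q * H b r s * C a b)"
        using Nr by (simp add: sum_distrib_left field_simps power2_eq_square)
      finally show ?thesis .
    qed
    have fi: "sqrt (\<Sum>p\<in>param_index L n. \<Sum>q\<in>param_index L n. \<Sum>r\<in>param_index L n. \<Sum>s\<in>param_index L n.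
          ((1 / real N) * (\<Sum>a<n L. \<Sum>b<n L. H a p q * H b r s * C a b))\<^sup>2)
       \<le> (1 / real N) * (\<Sum>a<n L. \<Sum>p\<in>param_index L n. \<Sum>q\<in>param_index L n. (H a p q)\<^sup>2) * sqrt (\<Sum>a<n L. \<Sum>b<n L. (C a b)\<^sup>2)"
      by (rule final_ineq[OF Pf Nr])
    show ?thesis unfolding cov using fi by (simp only: H_def C_def \<mu>_def)
  qed
qed


end
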